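(* Let $V$ be a finite set and $\mu\colon\binom V2\to\mathbb{Z}_+$ a starry sky function. Then $(\Delta_V)_\mu$ is homotopy equivalent to a single sphere.
   Context: $(\Delta_V)_\mu$ is the edge inflation of the full simplex on $V$: the poset of pairs $(I,c_I)$ with $\varnothing\neq I\subseteq V$ and $c_I\colon\binom I2\to\mathbb{Z}_+$, $c_I(e)\in\{1,\dots,\mu(e)\}$, ordered by $(I,c_I)<(J,c_J)$ iff $I\subsetneq J$ and $c_I=c_J|_{\binom I2}$; topology refers to the realization of its order complex. $G(\mu)$ is the simple graph on $V$ whose edges are the pairs $e$ with $\mu(e)>1$. $\mu$ is a starry sky function if $\mu(e)\leqslant2$ for all $e$ and every connected component of $G(\mu)$ is isomorphic to a star graph with at least $2$ vertices. *)

theory Defs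
  imports "HOL-Analysis.Analysis"
begin

definition pairs2 :: "'v set \<Rightarrow> 'v set set" where
  "pairs2 I = {e. e \<subseteq> I \<and> card e = 2}"

definition Gmu_adj :: "'v set \<Rightarrow> ('v set \<Rightarrow> nat) \<Rightarrow> 'v \<Rightarrow> 'v \<Rightarrow> bool" where
  "Gmu_adj V \<mu> u v \<longleftrightarrow> u \<in> V \<and> v \<in> V \<and> u \<noteq> v \<and> \<mu> {u, v} > 1"

definition Gmu_components :: "'v set \<Rightarrow> ('v set \<Rightarrow> nat) \<Rightarrow> 'v set set" where
  "Gmu_components V \<mu> = (\<lambda>v. {w. (Gmu_adj V \<mu>)\<^sup>*\<^sup>* v w}) ` V"

definition is_star_component :: "'v set \<Rightarrow> ('v set \<Rightarrow> nat) \<Rightarrow> 'v set \<Rightarrow> bool" where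
  "is_star_component V \<mu> C \<longleftrightarrow> 2 \<le> card C \<and>
     (\<exists>c\<in>C. \<forall>u\<in>C. \<forall>v\<in>C. Gmu_adj V \<mu> u v \<longleftrightarrow> u \<noteq> v \<and> (u = c \<or> v = c))"

definition starry_sky :: "'v set \<Rightarrow> ('v set \<Rightarrow> nat) \<Rightarrow> bool" where
  "starry_sky V \<mu> \<longleftrightarrow> (\<forall>e\<in>pairs2 V. \<mu> e \<le> 2) \<and>
     (\<forall>C\<in>Gmu_components V \<mu>. is_star_component V \<mu> C)"

text \<open>Elements of the edge inflation (Delta_V)_mu: pairs (I, c_I); c_I is represented as a
  function on all sets, fixed to 0 outside the 2-subsets of I (canonical representative).\<close>
definition inflation :: "'v set \<Rightarrow> ('v set \<Rightarrow> nat) \<Rightarrow> ('v set \<times> ('v set \<Rightarrow> nat)) set" where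
  "inflation V \<mu> = {(I, c). I \<noteq> {} \<and> I \<subseteq> V \<and>
      (\<forall>e\<in>pairs2 I. 1 \<le> c e \<and> c e \<le> \<mu> e) \<and> (\<forall>e. e \<notin> pairs2 I \<longrightarrow> c e = 0)}"

definition inflation_less :: "('v set \<times> ('v set \<Rightarrow> nat)) \<Rightarrow> ('v set \<times> ('v set \<Rightarrow> nat)) \<Rightarrow> bool" where
  "inflation_less p q \<longleftrightarrow> fst p \<subset> fst q \<and> (\<forall>e\<in>pairs2 (fst p). snd p e = snd q e)"

definition order_complex_realization :: "'a set \<Rightarrow> ('a \<Rightarrow> 'a \<Rightarrow> bool) \<Rightarrow> ('a \<Rightarrow> real) topology" where
  "order_complex_realization P lt = subtopology (powertop_real UNIV)
     {x. (\<forall>p. 0 \<le> x p) \<and> {p. x p \<noteq> 0} \<subseteq> P \<and>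
         (\<forall>p\<in>{p. x p \<noteq> 0}. \<forall>q\<in>{p. x p \<noteq> 0}. p = q \<or> lt p q \<or> lt q p) \<and>
         sum x {p. x p \<noteq> 0} = 1}"

end

theory Submission
  imports Defs
begin
lemma ex_maxf: assumes "finite R" "R \<noteq> {}" shows "\<exists>pm\<in>R. \<forall>p\<in>R. f p \<le> (f pm :: nat)"
proof -
  have "Max (f ` R) \<in> f ` R" using assms by simp
  then obtain pm where "pm \<in> R" "f pm = Max (f ` R)" by force
  moreover have "\<forall>p\<in>R. f p \<le> Max (f ` R)" using assms by simp
  ultimately show ?thesis by metis
qed

lemma ex_minf: assumes "finite R" "R \<noteq> {}" shows "\<exists>pm\<in>R. \<forall>p\<in>R. f pm \<le> (f p :: nat)"
proof -
  have "Min (f ` R) \<in> f ` R" using assms by simp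
  then obtain pm where "pm \<in> R" "f pm = Min (f ` R)" by force
  moreover have "\<forall>p\<in>R. Min (f ` R) \<le> f p" using assms by simp
  ultimately show ?thesis by metis
qed

definition chainS :: "('v set \<times> ('v set \<Rightarrow> nat)) set \<Rightarrow> bool" where
  "chainS S \<longleftrightarrow> (\<forall>p\<in>S. \<forall>q\<in>S. p = q \<or> inflation_less p q \<or> inflation_less q p)"

lemma chainD: "chainS S \<Longrightarrow> p \<in> S \<Longrightarrow> q \<in> S \<Longrightarrow> p = q \<or> inflation_less p q \<or> inflation_less q p"
  unfolding chainS_def by blast

lemma chain_sub: "chainS S \<Longrightarrow> p \<in> S \<Longrightarrow> q \<in> S \<Longrightarrow> fst p \<subseteq> fst q \<or> fst q \<subseteq> fst p"
  using chainD[of S p q] unfolding inflation_less_def by auto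

lemma chain_eq: "chainS S \<Longrightarrow> p \<in> S \<Longrightarrow> q \<in> S \<Longrightarrow> fst p = fst q \<Longrightarrow> p = q"
  using chainD[of S p q] unfolding inflation_less_def by auto

lemma pairs2_mono: "A \<subseteq> B \<Longrightarrow> pairs2 A \<subseteq> pairs2 B"
  unfolding pairs2_def by auto

lemma chain_col: "chainS S \<Longrightarrow> p \<in> S \<Longrightarrow> q \<in> S \<Longrightarrow> e \<in> pairs2 (fst p) \<Longrightarrow> e \<in> pairs2 (fst q)
   \<Longrightarrow> snd p e = snd q e"
proof -
  assume a: "chainS S" "p \<in> S" "q \<in> S" "e \<in> pairs2 (fst p)" "e \<in> pairs2 (fst q)"
  then have "p = q \<or> inflation_less p q \<or> inflation_less q p" using chainD by blast
  then show ?thesis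
  proof (elim disjE)
    assume "inflation_less p q" then show ?thesis using a(4) unfolding inflation_less_def by blast
  next
    assume "inflation_less q p" then show ?thesis using a(5) unfolding inflation_less_def by force
  qed simp
qed

lemma maxbelow:
  assumes "finite S" "chainS S" "J \<noteq> {}" "\<forall>p\<in>S. finite (fst p)"
  shows "\<exists>v\<in>J. \<forall>p\<in>S. v \<in> fst p \<longrightarrow> \<not> fst p \<subset> J"
proof (cases "{p\<in>S. fst p \<subset> J} = {}")
  case True
  then show ?thesis using assms(3) by blast
next
  case False
  have fin: "finite {p\<in>S. fst p \<subset> J}" using assms(1) by simp
  obtain pm where pm: "pm \<in> {p\<in>S. fst p \<subset> J}" "\<forall>p\<in>{p\<in>S. fst p \<subset> J}. card (fst p) \<le> card (fst pm)"
    using ex_maxf[OF fin False, of "\<lambda>p. card (fst p)"] by blast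
  have "fst pm \<subset> J" using pm(1) by simp
  then obtain v where v: "v \<in> J" "v \<notin> fst pm" by blast
  have "\<forall>p\<in>S. v \<in> fst p \<longrightarrow> \<not> fst p \<subset> J"
  proof (intro ballI impI notI)
    fix p assume p: "p \<in> S" "v \<in> fst p" "fst p \<subset> J"
    have "pm \<in> S" using pm(1) by simp
    then have o: "fst p \<subseteq> fst pm \<or> fst pm \<subseteq> fst p" using chain_sub[OF assms(2) p(1)] by blast
    have "p \<in> {p\<in>S. fst p \<subset> J}" using p by blast
    then have c: "card (fst p) \<le> card (fst pm)" using pm(2) by blast
    have f: "finite (fst p)" using assms(4) p by simp
    have "fst p \<subseteq> fst pm"
    proof (cases "fst p \<subseteq> fst pm")
      case False
      then have "fst pm \<subseteq> fst p" using o by blast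
      then have "fst pm = fst p" using card_seteq[OF f _ c] by blast
      then show ?thesis by simp
    qed simp
    then show False using v p by auto
  qed
  then show ?thesis using v by blast
qed

lemma minabove:
  assumes "finite T" "T \<noteq> {}" "T \<subseteq> S" "chainS S" "\<forall>p\<in>S. finite (fst p)"
  shows "\<exists>p'\<in>T. \<forall>p\<in>T. fst p' \<subseteq> fst p"
proof -
  obtain pm where pm: "pm \<in> T" "\<forall>p\<in>T. card (fst pm) \<le> card (fst p)"
    using ex_minf[OF assms(1,2), of "\<lambda>p. card (fst p)"] by blast
  have "\<forall>p\<in>T. fst pm \<subseteq> fst p"
  proof
    fix p assume p: "p \<in> T"
    have o: "fst p \<subseteq> fst pm \<or> fst pm \<subseteq> fst p" using chain_sub[OF assms(4)] p pm assms(3) by blast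
    have c: "card (fst pm) \<le> card (fst p)" using pm p by simp
    have f: "finite (fst pm)" using assms pm by blast
    show "fst pm \<subseteq> fst p"
    proof (cases "fst pm \<subseteq> fst p")
      case False
      then have "fst p \<subseteq> fst pm" using o by blast
      then have "fst p = fst pm" using card_seteq[OF f _ c] by blast
      then show ?thesis by simp
    qed simp
  qed
  then show ?thesis using pm by blast
qed

locale starsky =
  fixes V :: "'v set" and \<mu> :: "'v set \<Rightarrow> nat" and cen :: "'v \<Rightarrow> 'v"
  assumes finV: "finite V"
    and cenV: "\<And>v. v \<in> V \<Longrightarrow> cen v \<in> V"
    and cencen: "\<And>v. v \<in> V \<Longrightarrow> cen (cen v) = cen v"
    and hasleaf: "\<And>a. a \<in> V \<Longrightarrow> cen a = a \<Longrightarrow> \<exists>b\<in>V. cen b = a \<and> b \<noteq> a"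
    and mu12: "\<And>e. e \<in> pairs2 V \<Longrightarrow> 1 \<le> \<mu> e \<and> \<mu> e \<le> 2"
    and mu2: "\<And>e. e \<in> pairs2 V \<Longrightarrow> (1 < \<mu> e \<longleftrightarrow> (\<exists>b\<in>V. cen b \<noteq> b \<and> e = {cen b, b}))"
begin

abbreviation "PP \<equiv> inflation V \<mu>"
definition leaf where "leaf b \<longleftrightarrow> b \<in> V \<and> cen b \<noteq> b"
definition eb where "eb b = {cen b, b}"
definition sg :: "('v set \<Rightarrow> nat) \<Rightarrow> 'v \<Rightarrow> real" where
  "sg c b = (if c (eb b) = 1 then 1 else -1)"

lemma sg_sq: "sg c b * sg c b = 1" by (simp add: sg_def)

lemma eb_pairs2: "leaf b \<Longrightarrow> eb b \<subseteq> I \<Longrightarrow> eb b \<in> pairs2 I"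
  unfolding pairs2_def eb_def leaf_def by auto

lemma eb_pairs2V: "leaf b \<Longrightarrow> eb b \<in> pairs2 V"
  using eb_pairs2 cenV unfolding leaf_def eb_def by auto

lemma mu_eb: assumes "leaf b" shows "\<mu> (eb b) = 2"
proof -
  have "\<exists>b'\<in>V. cen b' \<noteq> b' \<and> eb b = {cen b', b'}" using assms unfolding leaf_def eb_def by blast
  then have "1 < \<mu> (eb b)" using mu2[OF eb_pairs2V[OF assms]] by simp
  then show ?thesis using mu12[OF eb_pairs2V[OF assms]] by simp
qed

lemma eb_inj: assumes "leaf b" "leaf b'" "eb b = eb b'" shows "b = b'"
proof -
  have "cen b = cen b' \<and> b = b' \<or> cen b = b' \<and> b = cen b'"
    using assms(3) unfolding eb_def doubleton_eq_iff by simp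
  then show ?thesis
  proof
    assume h: "cen b = b' \<and> b = cen b'"
    have "b \<in> V" using assms(1) unfolding leaf_def by simp
    then have "cen b' = cen b" using h cencen by metis
    then show ?thesis using h assms(1) unfolding leaf_def by simp
  qed simp
qed

lemma PP_D: "p \<in> PP \<Longrightarrow> fst p \<noteq> {} \<and> fst p \<subseteq> V \<and> (\<forall>e\<in>pairs2 (fst p). 1 \<le> snd p e \<and> snd p e \<le> \<mu> e)
   \<and> (\<forall>e. e \<notin> pairs2 (fst p) \<longrightarrow> snd p e = 0)"
  unfolding inflation_def by auto

lemma PP_fin: "p \<in> PP \<Longrightarrow> finite (fst p)"
  using PP_D finV finite_subset by metis

lemma col_single: assumes "p \<in> PP" "e \<in> pairs2 (fst p)" "\<not> (\<exists>b. leaf b \<and> e = eb b)"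
  shows "snd p e = 1"
proof -
  have eV: "e \<in> pairs2 V" using pairs2_mono PP_D assms(1,2) by blast
  have "\<not> (\<exists>b\<in>V. cen b \<noteq> b \<and> e = {cen b, b})" using assms(3) unfolding leaf_def eb_def by simp
  then have "\<not> 1 < \<mu> e" using mu2[OF eV] by simp
  moreover have "1 \<le> snd p e \<and> snd p e \<le> \<mu> e" using PP_D[OF assms(1)] assms(2) by simp
  ultimately show ?thesis by simp
qed

lemma col_leaf: assumes "p \<in> PP" "leaf b" "eb b \<subseteq> fst p"
  shows "snd p (eb b) = 1 \<or> snd p (eb b) = 2"
proof -
  have "1 \<le> snd p (eb b) \<and> snd p (eb b) \<le> \<mu> (eb b)"
    using PP_D[OF assms(1)] eb_pairs2[OF assms(2,3)] by simp
  then show ?thesis using mu_eb[OF assms(2)] by linarith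
qed

lemma finite_PP: "finite PP"
proof -
  define C where "C = {c. \<forall>e. (e \<in> pairs2 V \<longrightarrow> c e \<in> {0..2::nat}) \<and> (e \<notin> pairs2 V \<longrightarrow> c e = 0)}"
  have "PP \<subseteq> Pow V \<times> C"
  proof
    fix p assume p: "p \<in> PP"
    obtain I c where pic: "p = (I, c)" by force
    have IV: "I \<subseteq> V" using PP_D[OF p] unfolding pic by simp
    have "\<forall>e. (e \<in> pairs2 V \<longrightarrow> c e \<in> {0..2}) \<and> (e \<notin> pairs2 V \<longrightarrow> c e = 0)"
    proof (intro allI conjI impI)
      fix e assume eV: "e \<in> pairs2 V"
      show "c e \<in> {0..2}"
      proof (cases "e \<in> pairs2 I")
        case True
        then have "c e \<le> \<mu> e" using PP_D[OF p] unfolding pic by simp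
        then show ?thesis using mu12[OF eV] by simp
      next
        case False
        then show ?thesis using PP_D[OF p] unfolding pic by simp
      qed
    next
      fix e assume "e \<notin> pairs2 V"
      then have "e \<notin> pairs2 I" using pairs2_mono[OF IV] by blast
      then show "c e = 0" using PP_D[OF p] unfolding pic by simp
    qed
    then show "p \<in> Pow V \<times> C" using pic IV unfolding C_def by simp
  qed
  moreover have "finite (pairs2 V)" unfolding pairs2_def using finV by simp
  then have "finite C" unfolding C_def using finite_set_of_finite_funs[of "pairs2 V" "{0..2::nat}" 0] by simp
  then have "finite (Pow V \<times> C)" using finV by simp
  ultimately show ?thesis using finite_subset by blast
qed


definition Xs where
  "Xs = {x. (\<forall>p. 0 \<le> x p) \<and> {p. x p \<noteq> 0} \<subseteq> PP \<and>
         (\<forall>p\<in>{p. x p \<noteq> 0}. \<forall>q\<in>{p. x p \<noteq> 0}. p = q \<or> inflation_less p q \<or> inflation_less q p) \<and>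
         sum x {p. x p \<noteq> 0} = 1}"

definition tco :: "(('v set \<times> ('v set \<Rightarrow> nat)) \<Rightarrow> real) \<Rightarrow> 'v \<Rightarrow> real" where
  "tco x v = (\<Sum>p\<in>PP. x p * (if v \<in> fst p then 1 / real (card (fst p)) else 0))"

definition zco :: "(('v set \<times> ('v set \<Rightarrow> nat)) \<Rightarrow> real) \<Rightarrow> 'v \<Rightarrow> real" where
  "zco x b = (if leaf b then (\<Sum>p\<in>PP. x p * (if eb b \<subseteq> fst p then sg (snd p) b / real (card (fst p)) else 0)) else 0)"

definition Amin :: "('v \<Rightarrow> real) \<Rightarrow> ('v \<Rightarrow> real) \<Rightarrow> ('v set \<times> ('v set \<Rightarrow> nat)) \<Rightarrow> real" where
  "Amin t z p = Min (t ` fst p \<union> (\<lambda>b. sg (snd p) b * z b) ` {b. leaf b \<and> eb b \<subseteq> fst p})"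

definition Bmax :: "('v \<Rightarrow> real) \<Rightarrow> ('v set \<times> ('v set \<Rightarrow> nat)) \<Rightarrow> real" where
  "Bmax t p = Max (insert 0 (t ` (V - fst p)))"

definition bt :: "('v \<Rightarrow> real) \<Rightarrow> ('v \<Rightarrow> real) \<Rightarrow> ('v set \<times> ('v set \<Rightarrow> nat)) \<Rightarrow> real" where
  "bt t z p = (if p \<in> PP then real (card (fst p)) * max 0 (Amin t z p - Bmax t p) else 0)"

lemma fin_leafs: "finite {b. leaf b \<and> eb b \<subseteq> I}"
  using finV by (rule finite_subset[rotated]) (auto simp: leaf_def)

lemma Amin_fin: "p \<in> PP \<Longrightarrow> finite (t ` fst p \<union> (\<lambda>b. sg (snd p) b * z b) ` {b. leaf b \<and> eb b \<subseteq> fst p})"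
  using PP_fin fin_leafs by blast

lemma Amin_ne: "p \<in> PP \<Longrightarrow> t ` fst p \<union> (\<lambda>b. sg (snd p) b * z b) ` {b. leaf b \<and> eb b \<subseteq> fst p} \<noteq> {}"
  using PP_D by blast

lemma Amin_le_t: "p \<in> PP \<Longrightarrow> v \<in> fst p \<Longrightarrow> Amin t z p \<le> t v"
  unfolding Amin_def using Amin_fin by (intro Min_le) auto

lemma Amin_le_z: "p \<in> PP \<Longrightarrow> leaf b \<Longrightarrow> eb b \<subseteq> fst p \<Longrightarrow> Amin t z p \<le> sg (snd p) b * z b"
  unfolding Amin_def using Amin_fin by (intro Min_le) auto

lemma Amin_ge: assumes "p \<in> PP" "\<And>v. v \<in> fst p \<Longrightarrow> c \<le> t v"
  "\<And>b. leaf b \<Longrightarrow> eb b \<subseteq> fst p \<Longrightarrow> c \<le> sg (snd p) b * z b"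
  shows "c \<le> Amin t z p"
  unfolding Amin_def using Amin_fin[OF assms(1)] Amin_ne[OF assms(1)] assms(2,3) by (subst Min_ge_iff) auto

lemma Bmax_fin: "finite (insert 0 (t ` (V - fst p)))"
  using finV by simp

lemma Bmax_ge_t: "v \<in> V \<Longrightarrow> v \<notin> fst p \<Longrightarrow> t v \<le> Bmax t p"
  unfolding Bmax_def using Bmax_fin by (intro Max_ge) auto

lemma Bmax_ge0: "0 \<le> Bmax t p"
  unfolding Bmax_def using Bmax_fin by (intro Max_ge) auto

lemma Bmax_le: assumes "0 \<le> c" "\<And>v. v \<in> V \<Longrightarrow> v \<notin> fst p \<Longrightarrow> t v \<le> c"
  shows "Bmax t p \<le> c"
  unfolding Bmax_def using Bmax_fin assms by (subst Max_le_iff) auto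

lemma XsD: assumes "x \<in> Xs"
  shows "\<forall>p. 0 \<le> x p" "{p. x p \<noteq> 0} \<subseteq> PP" "chainS {p. x p \<noteq> 0}" "sum x {p. x p \<noteq> 0} = 1"
  using assms unfolding Xs_def chainS_def by auto

lemma sumPP_S: fixes x :: "('v set \<times> ('v set \<Rightarrow> nat)) \<Rightarrow> real"
  assumes "{p. x p \<noteq> 0} \<subseteq> PP"
  shows "(\<Sum>p\<in>PP. x p * g p) = (\<Sum>p\<in>{p. x p \<noteq> 0}. x p * g p)"
  by (rule sum.mono_neutral_right[OF finite_PP assms]) auto

lemma tco_S: fixes x :: "('v set \<times> ('v set \<Rightarrow> nat)) \<Rightarrow> real"
  assumes "{p. x p \<noteq> 0} \<subseteq> PP"
  shows "tco x v = sum (\<lambda>p. x p / real (card (fst p))) {p\<in>{p. x p \<noteq> 0}. v \<in> fst p}"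
proof -
  have fin: "finite {p. x p \<noteq> 0}" using finite_subset[OF assms finite_PP] .
  have "tco x v = (\<Sum>p\<in>{p. x p \<noteq> 0}. x p * (if v \<in> fst p then 1 / real (card (fst p)) else 0))"
    unfolding tco_def by (rule sumPP_S[OF assms])
  also have "\<dots> = (\<Sum>p\<in>{p. x p \<noteq> 0}. (if v \<in> fst p then x p / real (card (fst p)) else 0))"
    by (rule sum.cong) auto
  also have "\<dots> = sum (\<lambda>p. x p / real (card (fst p))) {p\<in>{p. x p \<noteq> 0}. v \<in> fst p}"
    by (simp only: sum.inter_filter[OF fin])
  finally show ?thesis .
qed

lemma zco_S: fixes x :: "('v set \<times> ('v set \<Rightarrow> nat)) \<Rightarrow> real"
  assumes "{p. x p \<noteq> 0} \<subseteq> PP" "leaf b"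
  shows "zco x b = sum (\<lambda>p. x p / real (card (fst p)) * sg (snd p) b) {p\<in>{p. x p \<noteq> 0}. eb b \<subseteq> fst p}"
proof -
  have fin: "finite {p. x p \<noteq> 0}" using finite_subset[OF assms(1) finite_PP] .
  have "zco x b = (\<Sum>p\<in>{p. x p \<noteq> 0}. x p * (if eb b \<subseteq> fst p then sg (snd p) b / real (card (fst p)) else 0))"
    unfolding zco_def using assms(2) by (simp add: sumPP_S[OF assms(1)])
  also have "\<dots> = (\<Sum>p\<in>{p. x p \<noteq> 0}. (if eb b \<subseteq> fst p then x p / real (card (fst p)) * sg (snd p) b else 0))"
    by (rule sum.cong) auto
  also have "\<dots> = sum (\<lambda>p. x p / real (card (fst p)) * sg (snd p) b) {p\<in>{p. x p \<noteq> 0}. eb b \<subseteq> fst p}"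
    by (simp only: sum.inter_filter[OF fin])
  finally show ?thesis .
qed

end

context starsky begin

lemma bt_tco:
  assumes x: "x \<in> Xs"
  shows "bt (tco x) (zco x) q = x q"
proof -
  define S where "S = {p. x p \<noteq> 0}"
  define w where "w p = x p / real (card (fst p))" for p
  define t where "t = tco x"
  define z where "z = zco x"
  have xnn: "\<forall>p. 0 \<le> x p" and Ssub: "S \<subseteq> PP" and chS: "chainS S"
    using XsD[OF x] unfolding S_def by auto
  have finS: "finite S" using finite_subset[OF Ssub finite_PP] .
  have finfst: "\<forall>p\<in>S. finite (fst p)" using PP_fin Ssub by blast
  have wnn: "\<And>p. 0 \<le> w p"
  proof -
    fix p have "0 \<le> x p" using xnn by blast
    then show "0 \<le> w p" unfolding w_def by simp
  qed
  have tS: "\<And>v. t v = sum w {p\<in>S. v \<in> fst p}"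
    unfolding t_def w_def S_def using tco_S[OF Ssub[unfolded S_def]] by simp
  have zS: "\<And>b. leaf b \<Longrightarrow> z b = sum (\<lambda>p. w p * sg (snd p) b) {p\<in>S. eb b \<subseteq> fst p}"
    unfolding z_def w_def S_def using zco_S[OF Ssub[unfolded S_def]] by simp
  have finF: "\<And>P. finite {p\<in>S. P p}" using finS by simp
  show ?thesis
  proof (cases "q \<in> PP")
    case False
    then have "x q = 0" using Ssub unfolding S_def by blast
    then show ?thesis using False unfolding bt_def by simp
  next
    case qP: True
    have qne: "fst q \<noteq> {}" and qV: "fst q \<subseteq> V" using PP_D[OF qP] by auto
    show ?thesis
    proof (cases "q \<in> S")
      case qS: True
      define lam where "lam = sum w {p\<in>S. fst q \<subseteq> fst p}"
      define mu' where "mu' = sum w {p\<in>S. fst q \<subset> fst p}"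
      have A: "Amin t z q = lam"
      proof (rule antisym)
        obtain v where v: "v \<in> fst q" "\<forall>p\<in>S. v \<in> fst p \<longrightarrow> \<not> fst p \<subset> fst q"
          using maxbelow[OF finS chS qne finfst] by blast
        have "{p\<in>S. v \<in> fst p} = {p\<in>S. fst q \<subseteq> fst p}"
        proof (intro set_eqI iffI)
          fix p assume p: "p \<in> {p\<in>S. v \<in> fst p}"
          then have "fst p \<subseteq> fst q \<or> fst q \<subseteq> fst p" using chain_sub[OF chS _ qS] by blast
          then show "p \<in> {p\<in>S. fst q \<subseteq> fst p}" using p v(2) by blast
        next
          fix p assume "p \<in> {p\<in>S. fst q \<subseteq> fst p}"
          then show "p \<in> {p\<in>S. v \<in> fst p}" using v(1) by blast
        qed
        then have "t v = lam" unfolding lam_def using tS by simp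
        then show "Amin t z q \<le> lam" using Amin_le_t[OF qP v(1), of t z] by simp
      next
        show "lam \<le> Amin t z q"
        proof (rule Amin_ge[OF qP])
          fix v assume v: "v \<in> fst q"
          have "lam \<le> sum w {p\<in>S. v \<in> fst p}" unfolding lam_def
            by (rule sum_mono2[OF finF]) (use v wnn in auto)
          then show "lam \<le> t v" using tS by simp
        next
          fix b assume b: "leaf b" "eb b \<subseteq> fst q"
          have "sg (snd q) b * z b = sg (snd q) b * sum (\<lambda>p. w p * sg (snd p) b) {p\<in>S. eb b \<subseteq> fst p}"
            using zS[OF b(1)] by simp
          also have "\<dots> = sum (\<lambda>p. sg (snd q) b * (w p * sg (snd p) b)) {p\<in>S. eb b \<subseteq> fst p}"
            by (simp add: sum_distrib_left)
          also have "\<dots> = sum w {p\<in>S. eb b \<subseteq> fst p}"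
          proof (rule sum.cong[OF refl])
            fix p assume p: "p \<in> {p\<in>S. eb b \<subseteq> fst p}"
            have "snd q (eb b) = snd p (eb b)"
              using chain_col[OF chS qS, of p "eb b"] p eb_pairs2[OF b(1)] b(2) by blast
            then have "sg (snd q) b = sg (snd p) b" unfolding sg_def by simp
            then show "sg (snd q) b * (w p * sg (snd p) b) = w p"
              using sg_sq[of "snd p" b] by simp
          qed
          finally have e: "sg (snd q) b * z b = sum w {p\<in>S. eb b \<subseteq> fst p}" .
          have "lam \<le> sum w {p\<in>S. eb b \<subseteq> fst p}" unfolding lam_def
            by (rule sum_mono2[OF finF]) (use b wnn in auto)
          then show "lam \<le> sg (snd q) b * z b" using e by simp
        qed
      qed
      have B: "Bmax t q = mu'"
      proof (rule antisym)
        show "Bmax t q \<le> mu'"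
        proof (rule Bmax_le)
          show "0 \<le> mu'" unfolding mu'_def using wnn by (simp add: sum_nonneg)
        next
          fix v assume v: "v \<in> V" "v \<notin> fst q"
          have "sum w {p\<in>S. v \<in> fst p} \<le> mu'" unfolding mu'_def
          proof (rule sum_mono2[OF finF])
            show "{p \<in> S. v \<in> fst p} \<subseteq> {p \<in> S. fst q \<subset> fst p}"
            proof
              fix p assume p: "p \<in> {p \<in> S. v \<in> fst p}"
              then have "fst p \<subseteq> fst q \<or> fst q \<subseteq> fst p" using chain_sub[OF chS _ qS] by blast
              then show "p \<in> {p \<in> S. fst q \<subset> fst p}" using p v by blast
            qed
          qed (use wnn in auto)
          then show "t v \<le> mu'" using tS by simp
        qed
      next
        show "mu' \<le> Bmax t q"
        proof (cases "{p\<in>S. fst q \<subset> fst p} = {}")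
          case True
          then have "mu' = 0" unfolding mu'_def by (simp only: sum.empty)
          then show ?thesis using Bmax_ge0[of t q] by simp
        next
          case False
          obtain p' where p': "p' \<in> {p\<in>S. fst q \<subset> fst p}" "\<forall>p\<in>{p\<in>S. fst q \<subset> fst p}. fst p' \<subseteq> fst p"
            using minabove[OF finF False _ chS finfst] by blast
          have "fst q \<subset> fst p'" using p'(1) by simp
          then obtain v where v: "v \<in> fst p'" "v \<notin> fst q" by blast
          have vV: "v \<in> V" using v(1) p'(1) Ssub PP_D by blast
          have "{p\<in>S. v \<in> fst p} = {p\<in>S. fst q \<subset> fst p}"
          proof (intro set_eqI iffI)
            fix p assume p: "p \<in> {p\<in>S. v \<in> fst p}"
            then have "fst p \<subseteq> fst q \<or> fst q \<subseteq> fst p" using chain_sub[OF chS _ qS] by blast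
            then show "p \<in> {p\<in>S. fst q \<subset> fst p}" using p v by blast
          next
            fix p assume "p \<in> {p\<in>S. fst q \<subset> fst p}"
            then show "p \<in> {p\<in>S. v \<in> fst p}" using p'(2) v(1) by blast
          qed
          then have "t v = mu'" unfolding mu'_def using tS by simp
          then show ?thesis using Bmax_ge_t[OF vV v(2), of t] by simp
        qed
      qed
      have "{p\<in>S. fst q \<subseteq> fst p} = insert q {p\<in>S. fst q \<subset> fst p}"
      proof (intro set_eqI iffI)
        fix p assume p: "p \<in> {p\<in>S. fst q \<subseteq> fst p}"
        show "p \<in> insert q {p\<in>S. fst q \<subset> fst p}"
        proof (cases "fst p = fst q")
          case True
          then have "p = q" using chain_eq[OF chS _ qS] p by blast
          then show ?thesis by simp
        next
          case False
          then show ?thesis using p by blast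
        qed
      next
        fix p assume "p \<in> insert q {p\<in>S. fst q \<subset> fst p}"
        then show "p \<in> {p\<in>S. fst q \<subseteq> fst p}" using qS by blast
      qed
      then have "lam = w q + mu'" unfolding lam_def mu'_def
        using finF by (simp add: sum.insert)
      then have "Amin t z q - Bmax t q = w q" using A B by simp
      moreover have "real (card (fst q)) > 0" using qne PP_fin[OF qP] by (simp add: card_gt_0_iff)
      moreover have "0 \<le> x q" using xnn by blast
      ultimately show ?thesis unfolding bt_def t_def[symmetric] z_def[symmetric] w_def
        using qP by simp
    next
      case qS: False
      then have xq: "x q = 0" unfolding S_def by simp
      have "Amin t z q \<le> Bmax t q"
      proof (cases "\<exists>p\<in>S. fst p = fst q")
        case True
        then obtain p where p: "p \<in> S" "fst p = fst q" by blast
        have pP: "p \<in> PP" using p Ssub by blast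
        have "p \<noteq> q" using p qS by blast
        then have "snd p \<noteq> snd q" using p(2) by (metis prod.expand)
        then obtain e where e: "snd p e \<noteq> snd q e" by blast
        have ep: "e \<in> pairs2 (fst q)"
        proof (rule ccontr)
          assume "e \<notin> pairs2 (fst q)"
          then show False using PP_D[OF pP] PP_D[OF qP] e p(2) by simp
        qed
        have "\<exists>b. leaf b \<and> e = eb b"
        proof (rule ccontr)
          assume n: "\<not> (\<exists>b. leaf b \<and> e = eb b)"
          have "snd p e = 1" using col_single[OF pP _ n] ep p(2) by simp
          moreover have "snd q e = 1" using col_single[OF qP ep n] .
          ultimately show False using e by simp
        qed
        then obtain b where b: "leaf b" "e = eb b" by blast
        have ebq: "eb b \<subseteq> fst q" using ep b unfolding pairs2_def by simp
        have "sg (snd q) b = - sg (snd p) b"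
          using col_leaf[OF pP b(1)] col_leaf[OF qP b(1) ebq] ebq p(2) e b(2) unfolding sg_def by auto
        have "sg (snd q) b * z b = sg (snd q) b * sum (\<lambda>p. w p * sg (snd p) b) {p\<in>S. eb b \<subseteq> fst p}"
          using zS[OF b(1)] by simp
        also have "\<dots> = sum (\<lambda>p'. sg (snd q) b * (w p' * sg (snd p') b)) {p\<in>S. eb b \<subseteq> fst p}"
          by (simp add: sum_distrib_left)
        also have "\<dots> = sum (\<lambda>p'. - w p') {p\<in>S. eb b \<subseteq> fst p}"
        proof (rule sum.cong[OF refl])
          fix p' assume p': "p' \<in> {p\<in>S. eb b \<subseteq> fst p}"
          have "snd p (eb b) = snd p' (eb b)"
            using chain_col[OF chS p(1), of p' "eb b"] p' eb_pairs2[OF b(1)] ebq p(2) by blast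
          then have "sg (snd p) b = sg (snd p') b" unfolding sg_def by simp
          then show "sg (snd q) b * (w p' * sg (snd p') b) = - w p'"
            using sg_sq[of "snd p'" b] \<open>sg (snd q) b = - sg (snd p) b\<close> by simp
        qed
        also have "\<dots> \<le> 0" by (rule sum_nonpos) (use wnn in simp)
        finally have "sg (snd q) b * z b \<le> 0" .
        then show ?thesis using Amin_le_z[OF qP b(1) ebq, of t z] Bmax_ge0[of t q] by linarith
      next
        case False
        obtain v where v: "v \<in> fst q" "\<forall>p\<in>S. v \<in> fst p \<longrightarrow> \<not> fst p \<subset> fst q"
          using maxbelow[OF finS chS qne finfst] by blast
        have v2: "\<forall>p\<in>S. v \<in> fst p \<longrightarrow> \<not> fst p \<subseteq> fst q"
          using v(2) False by blast
        show ?thesis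
        proof (cases "{p\<in>S. \<not> fst p \<subseteq> fst q} = {}")
          case True
          then have e0: "{p\<in>S. v \<in> fst p} = {}" using v2 by blast
          have "t v = sum w {p\<in>S. v \<in> fst p}" using tS by blast
          then have "t v = 0" unfolding e0 by simp
          then show ?thesis using Amin_le_t[OF qP v(1), of t z] Bmax_ge0[of t q] by linarith
        next
          case ne: False
          obtain p' where p': "p' \<in> {p\<in>S. \<not> fst p \<subseteq> fst q}" "\<forall>p\<in>{p\<in>S. \<not> fst p \<subseteq> fst q}. fst p' \<subseteq> fst p"
            using minabove[OF finF ne _ chS finfst] by blast
          obtain u where u: "u \<in> fst p'" "u \<notin> fst q" using p'(1) by blast
          have uV: "u \<in> V" using u(1) p'(1) Ssub PP_D by blast
          have "sum w {p\<in>S. v \<in> fst p} \<le> sum w {p\<in>S. u \<in> fst p}"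
          proof (rule sum_mono2[OF finF])
            show "{p\<in>S. v \<in> fst p} \<subseteq> {p\<in>S. u \<in> fst p}"
            proof
              fix p assume p: "p \<in> {p\<in>S. v \<in> fst p}"
              then have "p \<in> {p\<in>S. \<not> fst p \<subseteq> fst q}" using v2 by blast
              then show "p \<in> {p\<in>S. u \<in> fst p}" using p'(2) u(1) by blast
            qed
          qed (use wnn in auto)
          then have "t v \<le> t u" using tS by simp
          then show ?thesis using Amin_le_t[OF qP v(1), of t z] Bmax_ge_t[OF uV u(2), of t] by linarith
        qed
      qed
      then show ?thesis unfolding bt_def t_def[symmetric] z_def[symmetric] using qP xq by simp
    qed
  qed
qed

end

context starsky begin

definition Yc :: "('v \<Rightarrow> real) \<Rightarrow> ('v \<Rightarrow> real) \<Rightarrow> bool" where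
  "Yc t z \<longleftrightarrow> (\<forall>v. 0 \<le> t v) \<and> (\<forall>v. v \<notin> V \<longrightarrow> t v = 0) \<and>
     (\<forall>b. if leaf b then \<bar>z b\<bar> = min (t (cen b)) (t b) else z b = 0)"

definition Ys where "Ys = {(t, z). Yc t z \<and> sum t V = 1}"

lemma leafV: "leaf b \<Longrightarrow> b \<in> V \<and> cen b \<in> V \<and> cen b \<noteq> b"
  unfolding leaf_def using cenV by auto

lemma tco_lin: "tco (\<lambda>p. x p + (if p = p0 then c else 0)) v
   = tco x v + (if p0 \<in> PP then c * (if v \<in> fst p0 then 1 / real (card (fst p0)) else 0) else 0)"
proof -
  have "tco (\<lambda>p. x p + (if p = p0 then c else 0)) v
      = (\<Sum>p\<in>PP. x p * (if v \<in> fst p then 1 / real (card (fst p)) else 0))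
        + (\<Sum>p\<in>PP. (if p = p0 then c else 0) * (if v \<in> fst p then 1 / real (card (fst p)) else 0))"
    unfolding tco_def by (simp add: distrib_right sum.distrib)
  also have "(\<Sum>p\<in>PP. (if p = p0 then c else 0) * (if v \<in> fst p then 1 / real (card (fst p)) else 0))
     = (\<Sum>p\<in>PP. (if p = p0 then c * (if v \<in> fst p0 then 1 / real (card (fst p0)) else 0) else 0))"
    by (rule sum.cong) auto
  also have "\<dots> = (if p0 \<in> PP then c * (if v \<in> fst p0 then 1 / real (card (fst p0)) else 0) else 0)"
    using finite_PP by (simp add: sum.delta)
  finally show ?thesis unfolding tco_def by simp
qed

lemma zco_lin: "zco (\<lambda>p. x p + (if p = p0 then c else 0)) b
   = zco x b + (if leaf b \<and> p0 \<in> PP then c * (if eb b \<subseteq> fst p0 then sg (snd p0) b / real (card (fst p0)) else 0) else 0)"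
proof (cases "leaf b")
  case True
  have "zco (\<lambda>p. x p + (if p = p0 then c else 0)) b
      = (\<Sum>p\<in>PP. x p * (if eb b \<subseteq> fst p then sg (snd p) b / real (card (fst p)) else 0))
        + (\<Sum>p\<in>PP. (if p = p0 then c else 0) * (if eb b \<subseteq> fst p then sg (snd p) b / real (card (fst p)) else 0))"
    unfolding zco_def using True by (simp add: distrib_right sum.distrib)
  also have "(\<Sum>p\<in>PP. (if p = p0 then c else 0) * (if eb b \<subseteq> fst p then sg (snd p) b / real (card (fst p)) else 0))
     = (\<Sum>p\<in>PP. (if p = p0 then c * (if eb b \<subseteq> fst p0 then sg (snd p0) b / real (card (fst p0)) else 0) else 0))"
    by (rule sum.cong) auto
  also have "\<dots> = (if p0 \<in> PP then c * (if eb b \<subseteq> fst p0 then sg (snd p0) b / real (card (fst p0)) else 0) else 0)"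
    using finite_PP by (simp add: sum.delta)
  finally show ?thesis unfolding zco_def using True by simp
next
  case False
  then show ?thesis unfolding zco_def by simp
qed

lemma surj_cone:
  "card {v\<in>V. t v \<noteq> 0} = k \<Longrightarrow> Yc t z \<Longrightarrow>
   \<exists>x. (\<forall>p. 0 \<le> x p) \<and> {p. x p \<noteq> 0} \<subseteq> PP \<and> chainS {p. x p \<noteq> 0} \<and>
     (\<forall>p. x p \<noteq> 0 \<longrightarrow> fst p \<subseteq> {v\<in>V. t v \<noteq> 0} \<and> (\<forall>b. leaf b \<and> eb b \<subseteq> fst p \<longrightarrow> 0 < sg (snd p) b * z b)) \<and>
     tco x = t \<and> zco x = z"
proof (induction k arbitrary: t z rule: less_induct)
  case (less k)
  note Y = less.prems(2)
  have tnn: "\<And>v. 0 \<le> t v" and tV: "\<And>v. v \<notin> V \<Longrightarrow> t v = 0"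
    and zl: "\<And>b. leaf b \<Longrightarrow> \<bar>z b\<bar> = min (t (cen b)) (t b)"
    and znl: "\<And>b. \<not> leaf b \<Longrightarrow> z b = 0"
    using Y unfolding Yc_def by (auto split: if_splits)
  define U where "U = {v\<in>V. t v \<noteq> 0}"
  have finU: "finite U" unfolding U_def using finV by simp
  show ?case
  proof (cases "U = {}")
    case True
    have t0: "\<And>v. t v = 0" using True tV unfolding U_def by blast
    have z0: "\<And>b. z b = 0"
    proof -
      fix b show "z b = 0"
        using zl[of b] znl[of b] t0 by (cases "leaf b") auto
    qed
    have "tco (\<lambda>p. 0) = t" using t0 unfolding tco_def by (simp add: fun_eq_iff)
    moreover have "zco (\<lambda>p. 0) = z" using z0 unfolding zco_def by (simp add: fun_eq_iff)
    moreover have "chainS {p. (0::real) \<noteq> 0}" unfolding chainS_def by simp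
    ultimately show ?thesis by (intro exI[of _ "\<lambda>p. 0"]) auto
  next
    case Une: False
    define \<theta> where "\<theta> = Min (t ` U)"
    have \<theta>in: "\<theta> \<in> t ` U" unfolding \<theta>_def using finU Une by simp
    then obtain v0 where v0: "v0 \<in> U" "t v0 = \<theta>" by auto
    have \<theta>le: "\<And>v. v \<in> U \<Longrightarrow> \<theta> \<le> t v" unfolding \<theta>_def using finU by simp
    have tpos: "\<And>v. v \<in> U \<Longrightarrow> 0 < t v" using tnn unfolding U_def by (simp add: order_le_neq_trans)
    have \<theta>pos: "0 < \<theta>" using tpos[OF v0(1)] v0(2) by linarith
    define c0 where "c0 e = (if e \<in> pairs2 U then (if \<exists>b. leaf b \<and> e = eb b \<and> z b < 0 then 2 else 1) else (0::nat))" for e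
    define p0 where "p0 = (U, c0)"
    have UV: "U \<subseteq> V" unfolding U_def by blast
    have p0P: "p0 \<in> PP"
    proof -
      have "\<forall>e\<in>pairs2 U. 1 \<le> c0 e \<and> c0 e \<le> \<mu> e"
      proof
        fix e assume e: "e \<in> pairs2 U"
        have eV: "e \<in> pairs2 V" using e pairs2_mono[OF UV] by blast
        show "1 \<le> c0 e \<and> c0 e \<le> \<mu> e"
        proof (cases "\<exists>b. leaf b \<and> e = eb b \<and> z b < 0")
          case True
          then obtain b where "leaf b" "e = eb b" by blast
          then have "\<mu> e = 2" using mu_eb by simp
          then show ?thesis using True e unfolding c0_def by simp
        next
          case False
          then have "c0 e = 1" using e unfolding c0_def by simp
          then show ?thesis using mu12[OF eV] by simp
        qed
      qed
      moreover have "\<forall>e. e \<notin> pairs2 U \<longrightarrow> c0 e = 0" unfolding c0_def by simp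
      ultimately show ?thesis unfolding p0_def inflation_def using Une UV by simp
    qed
    have ebU: "\<And>b. leaf b \<Longrightarrow> eb b \<subseteq> U \<Longrightarrow> \<theta> \<le> \<bar>z b\<bar>"
    proof -
      fix b assume b: "leaf b" "eb b \<subseteq> U"
      have "cen b \<in> U" "b \<in> U" using b(2) unfolding eb_def by auto
      then show "\<theta> \<le> \<bar>z b\<bar>" using zl[OF b(1)] \<theta>le by simp
    qed
    have sgc0: "\<And>b. leaf b \<Longrightarrow> eb b \<subseteq> U \<Longrightarrow> sg c0 b = (if z b < 0 then -1 else 1)"
    proof -
      fix b assume b: "leaf b" "eb b \<subseteq> U"
      have "(\<exists>b'. leaf b' \<and> eb b = eb b' \<and> z b' < 0) \<longleftrightarrow> z b < 0"
        using eb_inj b(1) by metis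
      then show "sg c0 b = (if z b < 0 then -1 else 1)"
        unfolding sg_def c0_def using eb_pairs2[OF b] by auto
    qed
    have sgz: "\<And>b. leaf b \<Longrightarrow> eb b \<subseteq> U \<Longrightarrow> sg c0 b * z b = \<bar>z b\<bar>"
      using sgc0 by simp
    define t' where "t' v = (if v \<in> U then t v - \<theta> else t v)" for v
    define z' where "z' b = (if leaf b \<and> eb b \<subseteq> U then z b - \<theta> * sg c0 b else z b)" for b
    have Y': "Yc t' z'"
      unfolding Yc_def
    proof (intro conjI allI impI)
      fix v show "0 \<le> t' v" unfolding t'_def using \<theta>le tnn by simp
    next
      fix v assume "v \<notin> V" then show "t' v = 0" unfolding t'_def using tV UV by auto
    next
      fix b
      show "if leaf b then \<bar>z' b\<bar> = min (t' (cen b)) (t' b) else z' b = 0"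
      proof (cases "leaf b")
        case False then show ?thesis using znl unfolding z'_def by simp
      next
        case lb: True
        show ?thesis
        proof (cases "eb b \<subseteq> U")
          case True
          have cb: "cen b \<in> U" "b \<in> U" using True unfolding eb_def by auto
          have "z' b = sg c0 b * (\<bar>z b\<bar> - \<theta>)" unfolding z'_def using lb True sgc0[OF lb True] by auto
          then have "\<bar>z' b\<bar> = \<bar>z b\<bar> - \<theta>" using ebU[OF lb True] sgc0[OF lb True] by (auto simp: abs_mult)
          then show ?thesis using lb zl[OF lb] cb unfolding t'_def by simp
        next
          case False
          then have "cen b \<notin> U \<or> b \<notin> U" unfolding eb_def by auto
          then obtain u where u: "u \<in> {cen b, b}" "u \<notin> U" by blast
          have uV: "u \<in> V" using u(1) leafV[OF lb] by auto
          have tu: "t u = 0" using u uV unfolding U_def by blast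
          have t'u: "t' u = 0" using u tu unfolding t'_def by simp
          have t'nn: "0 \<le> t' v" for v unfolding t'_def using \<theta>le tnn by simp
          have m1: "min (t (cen b)) (t b) = 0" using u(1) tu tnn[of b] tnn[of "cen b"] by (auto simp: min_def)
          have m2: "min (t' (cen b)) (t' b) = 0" using u(1) t'u t'nn[of b] t'nn[of "cen b"] by (auto simp: min_def)
          show ?thesis using lb False zl[OF lb] m1 m2 unfolding z'_def by simp
        qed
      qed
    qed
    define U' where "U' = {v\<in>V. t' v \<noteq> 0}"
    have U'U: "U' \<subseteq> U" unfolding U'_def U_def t'_def by auto
    have v0U': "v0 \<notin> U'" unfolding U'_def t'_def using v0 by simp
    have U'lt: "U' \<subset> U" using U'U v0U' v0(1) by blast
    have "card U' < k" using psubset_card_mono[OF finU U'lt] less.prems(1) unfolding U_def by simp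
    then obtain x' where x': "\<forall>p. 0 \<le> x' p" "{p. x' p \<noteq> 0} \<subseteq> PP" "chainS {p. x' p \<noteq> 0}"
      "\<forall>p. x' p \<noteq> 0 \<longrightarrow> fst p \<subseteq> U' \<and> (\<forall>b. leaf b \<and> eb b \<subseteq> fst p \<longrightarrow> 0 < sg (snd p) b * z' b)"
      "tco x' = t'" "zco x' = z'"
      using less.IH[OF _ refl Y'] unfolding U'_def by blast
    define c where "c = real (card U) * \<theta>"
    have cpos: "0 < c" unfolding c_def using \<theta>pos Une finU by (simp add: card_gt_0_iff)
    define x where "x p = x' p + (if p = p0 then c else 0)" for p
    have x'p0: "x' p0 = 0"
    proof (rule ccontr)
      assume "x' p0 \<noteq> 0"
      then have "U \<subseteq> U'" using x'(4) unfolding p0_def by auto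
      then show False using U'lt by blast
    qed
    have supp: "{p. x p \<noteq> 0} = insert p0 {p. x' p \<noteq> 0}"
      unfolding x_def using x'p0 cpos by auto
    have sgagree: "\<And>p b. x' p \<noteq> 0 \<Longrightarrow> leaf b \<Longrightarrow> eb b \<subseteq> fst p \<Longrightarrow> sg (snd p) b = sg c0 b \<and> \<theta> < \<bar>z b\<bar>"
    proof -
      fix p b assume p: "x' p \<noteq> 0" and b: "leaf b" "eb b \<subseteq> fst p"
      have fU: "fst p \<subseteq> U'" using x'(4) p by blast
      then have ebU0: "eb b \<subseteq> U" using b(2) U'U by blast
      have pos: "0 < sg (snd p) b * z' b" using x'(4) p b by blast
      have "z' b = sg c0 b * (\<bar>z b\<bar> - \<theta>)" unfolding z'_def using b(1) ebU0 sgc0[OF b(1) ebU0] by auto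
      then have pos2: "0 < (sg (snd p) b * sg c0 b) * (\<bar>z b\<bar> - \<theta>)" using pos by (simp add: mult.assoc)
      have "\<bar>z b\<bar> - \<theta> \<ge> 0" using ebU[OF b(1) ebU0] by simp
      then have "0 < sg (snd p) b * sg c0 b" "0 < \<bar>z b\<bar> - \<theta>" using pos2 by (auto simp: zero_less_mult_iff)
      then show "sg (snd p) b = sg c0 b \<and> \<theta> < \<bar>z b\<bar>" unfolding sg_def by (auto split: if_splits)
    qed
    have supp_prop: "fst p \<subseteq> {v\<in>V. t v \<noteq> 0} \<and> (\<forall>b. leaf b \<and> eb b \<subseteq> fst p \<longrightarrow> 0 < sg (snd p) b * z b)"
      if p: "x p \<noteq> 0" for p
      proof (cases "p = p0")
        case True
        have "\<forall>b. leaf b \<and> eb b \<subseteq> fst p \<longrightarrow> 0 < sg (snd p) b * z b"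
        proof (intro allI impI)
          fix b assume b: "leaf b \<and> eb b \<subseteq> fst p"
          then have ebU': "eb b \<subseteq> U" using True unfolding p0_def by simp
          have "sg (snd p) b * z b = \<bar>z b\<bar>" using sgz[OF _ ebU'] b True unfolding p0_def by simp
          then show "0 < sg (snd p) b * z b" using ebU[OF _ ebU'] b \<theta>pos by simp
        qed
        then show ?thesis using True unfolding p0_def U_def by simp
      next
        case False
        then have p': "x' p \<noteq> 0" using p unfolding x_def by simp
        have "fst p \<subseteq> U" using x'(4) p' U'U by blast
        moreover have "\<forall>b. leaf b \<and> eb b \<subseteq> fst p \<longrightarrow> 0 < sg (snd p) b * z b"
        proof (intro allI impI)
          fix b assume b: "leaf b \<and> eb b \<subseteq> fst p"
          have ebU': "eb b \<subseteq> U" using b \<open>fst p \<subseteq> U\<close> by blast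
          have "sg (snd p) b = sg c0 b" "\<theta> < \<bar>z b\<bar>" using sgagree[OF p'] b by auto
          then show "0 < sg (snd p) b * z b" using sgz[OF _ ebU'] b \<theta>pos by simp
        qed
        ultimately show ?thesis unfolding U_def by simp
      qed
    show ?thesis
    proof (intro exI[of _ x] conjI allI impI)
      fix p have "0 \<le> x' p" using x'(1) by blast
      then show "0 \<le> x p" unfolding x_def using cpos by simp
    next
      show "{p. x p \<noteq> 0} \<subseteq> PP" unfolding supp using x'(2) p0P by blast
    next
      have less0: "\<And>p. x' p \<noteq> 0 \<Longrightarrow> inflation_less p p0"
      proof -
        fix p assume p: "x' p \<noteq> 0"
        have pP: "p \<in> PP" using p x'(2) by blast
        have fU: "fst p \<subset> U" using x'(4) p U'lt by blast
        have "\<forall>e\<in>pairs2 (fst p). snd p e = c0 e"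
        proof
          fix e assume e: "e \<in> pairs2 (fst p)"
          have eU: "e \<in> pairs2 U" using e pairs2_mono[of "fst p" U] fU by blast
          have p0e: "e \<in> pairs2 (fst p0)" using eU unfolding p0_def by simp
          show "snd p e = c0 e"
          proof (cases "\<exists>b. leaf b \<and> e = eb b")
            case True
            then obtain b where b: "leaf b" "e = eb b" by blast
            have ebp: "eb b \<subseteq> fst p" using e b unfolding pairs2_def by simp
            have "sg (snd p) b = sg c0 b" using sgagree[OF p b(1) ebp] by simp
            moreover have "snd p (eb b) = 1 \<or> snd p (eb b) = 2" using col_leaf[OF pP b(1) ebp] .
            moreover have "c0 (eb b) = 1 \<or> c0 (eb b) = 2" using col_leaf[OF p0P b(1)] ebp fU unfolding p0_def by auto
            ultimately show ?thesis using b(2) unfolding sg_def by (auto split: if_splits)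
          next
            case False
            have "snd p e = 1" using col_single[OF pP e False] .
            moreover have "snd p0 e = 1" using col_single[OF p0P p0e False] .
            ultimately show ?thesis unfolding p0_def by simp
          qed
        qed
        then show "inflation_less p p0" unfolding inflation_less_def p0_def using fU by simp
      qed
      show "chainS {p. x p \<noteq> 0}" unfolding supp chainS_def
      proof (intro ballI)
        fix p q assume p: "p \<in> insert p0 {p. x' p \<noteq> 0}" and q: "q \<in> insert p0 {p. x' p \<noteq> 0}"
        show "p = q \<or> inflation_less p q \<or> inflation_less q p"
        proof (cases "p = p0")
          case True
          show ?thesis
          proof (cases "q = p0")
            case False
            then have "x' q \<noteq> 0" using q by simp
            then show ?thesis using less0 True by blast
          qed (use True in simp)
        next
          case False
          then have p': "x' p \<noteq> 0" using p by simp
          show ?thesis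
          proof (cases "q = p0")
            case True then show ?thesis using less0[OF p'] by simp
          next
            case False
            then have "x' q \<noteq> 0" using q by simp
            then show ?thesis using chainD[OF x'(3)] p' by blast
          qed
        qed
      qed
    next
      fix p assume p: "x p \<noteq> 0"
      show "fst p \<subseteq> {v\<in>V. t v \<noteq> 0}" using supp_prop[OF p] by blast
    next
      fix p b assume p: "x p \<noteq> 0" and b: "leaf b \<and> eb b \<subseteq> fst p"
      show "0 < sg (snd p) b * z b" using supp_prop[OF p] b by blast
    next
      show "tco x = t"
      proof
        fix v
        have "tco x v = t' v + c * (if v \<in> U then 1 / real (card U) else 0)"
          unfolding x_def tco_lin using p0P x'(5) unfolding p0_def by simp
        also have "\<dots> = t v" unfolding t'_def c_def using Une finU by (auto simp: card_gt_0_iff)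
        finally show "tco x v = t v" .
      qed
    next
      show "zco x = z"
      proof
        fix b
        have "zco x b = z' b + (if leaf b then c * (if eb b \<subseteq> U then sg c0 b / real (card U) else 0) else 0)"
          unfolding x_def zco_lin using p0P x'(6) unfolding p0_def by simp
        also have "\<dots> = z b" unfolding z'_def c_def using Une finU by (auto simp: card_gt_0_iff)
        finally show "zco x b = z b" .
      qed
    qed
  qed
qed


lemma sum_tco: fixes x :: "('v set \<times> ('v set \<Rightarrow> nat)) \<Rightarrow> real"
  assumes "{p. x p \<noteq> 0} \<subseteq> PP"
  shows "sum (tco x) V = sum x PP"
proof -
  have "sum (tco x) V = (\<Sum>p\<in>PP. \<Sum>v\<in>V. x p * (if v \<in> fst p then 1 / real (card (fst p)) else 0))"
    unfolding tco_def by (rule sum.swap)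
  also have "\<dots> = (\<Sum>p\<in>PP. x p)"
  proof (rule sum.cong[OF refl])
    fix p assume p: "p \<in> PP"
    have "(\<Sum>v\<in>V. x p * (if v \<in> fst p then 1 / real (card (fst p)) else 0))
        = x p * (\<Sum>v\<in>V. (if v \<in> fst p then 1 / real (card (fst p)) else 0))"
      by (simp add: sum_distrib_left)
    also have "(\<Sum>v\<in>V. (if v \<in> fst p then 1 / real (card (fst p)) else 0)) = (\<Sum>v\<in>{v\<in>V. v \<in> fst p}. 1 / real (card (fst p)))"
      by (simp only: sum.inter_filter[OF finV])
    also have "{v\<in>V. v \<in> fst p} = fst p" using PP_D[OF p] by blast
    also have "(\<Sum>v\<in>fst p. 1 / real (card (fst p))) = 1"
      using PP_D[OF p] PP_fin[OF p] by (simp add: card_gt_0_iff)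
    finally show "(\<Sum>v\<in>V. x p * (if v \<in> fst p then 1 / real (card (fst p)) else 0)) = x p" by simp
  qed
  finally show ?thesis .
qed

lemma Xs_sumPP: "x \<in> Xs \<Longrightarrow> sum x PP = 1"
proof -
  assume x: "x \<in> Xs"
  have "sum x PP = sum x {p. x p \<noteq> 0}"
    by (rule sum.mono_neutral_right[OF finite_PP XsD(2)[OF x]]) auto
  then show ?thesis using XsD(4)[OF x] by simp
qed

lemma Xs_to_Ys: assumes x: "x \<in> Xs" shows "(tco x, zco x) \<in> Ys"
proof -
  define S where "S = {p. x p \<noteq> 0}"
  define w where "w p = x p / real (card (fst p))" for p
  have xnn: "\<And>p. 0 \<le> x p" using XsD(1)[OF x] by blast
  have Ssub: "S \<subseteq> PP" and chS: "chainS S" using XsD[OF x] unfolding S_def by auto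
  have finS: "finite S" using finite_subset[OF Ssub finite_PP] .
  have wnn: "\<And>p. 0 \<le> w p" unfolding w_def using xnn by simp
  have tS: "\<And>v. tco x v = sum w {p\<in>S. v \<in> fst p}"
    unfolding w_def S_def using tco_S[OF Ssub[unfolded S_def]] by simp
  have zS: "\<And>b. leaf b \<Longrightarrow> zco x b = sum (\<lambda>p. w p * sg (snd p) b) {p\<in>S. eb b \<subseteq> fst p}"
    unfolding w_def S_def using zco_S[OF Ssub[unfolded S_def]] by simp
  have finF: "\<And>P. finite {p\<in>S. P p}" using finS by simp
  have Yc: "Yc (tco x) (zco x)" unfolding Yc_def
  proof (intro conjI allI impI)
    fix v show "0 \<le> tco x v" unfolding tS using wnn by (simp add: sum_nonneg)
  next
    fix v assume v: "v \<notin> V"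
    have "{p\<in>S. v \<in> fst p} = {}" using v Ssub PP_D by blast
    then show "tco x v = 0" unfolding tS by (simp only: sum.empty)
  next
    fix b
    show "if leaf b then \<bar>zco x b\<bar> = min (tco x (cen b)) (tco x b) else zco x b = 0"
    proof (cases "leaf b")
      case False then show ?thesis unfolding zco_def by simp
    next
      case lb: True
      define Aa where "Aa = {p\<in>S. cen b \<in> fst p}"
      define Ab where "Ab = {p\<in>S. b \<in> fst p}"
      define E where "E = {p\<in>S. eb b \<subseteq> fst p}"
      have E: "E = Aa \<inter> Ab" unfolding E_def Aa_def Ab_def eb_def by blast
      have cmp: "Aa \<subseteq> Ab \<or> Ab \<subseteq> Aa"
      proof (rule ccontr)
        assume "\<not> (Aa \<subseteq> Ab \<or> Ab \<subseteq> Aa)"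
        then obtain p q where pq: "p \<in> Aa" "p \<notin> Ab" "q \<in> Ab" "q \<notin> Aa" by blast
        have "fst p \<subseteq> fst q \<or> fst q \<subseteq> fst p" using chain_sub[OF chS] pq unfolding Aa_def Ab_def by blast
        then show False using pq unfolding Aa_def Ab_def by blast
      qed
      have minE: "min (tco x (cen b)) (tco x b) = sum w E"
      proof -
        have ta: "tco x (cen b) = sum w Aa" unfolding Aa_def tS ..
        have tb: "tco x b = sum w Ab" unfolding Ab_def tS ..
        show ?thesis
        proof (cases "Aa \<subseteq> Ab")
          case True
          have "sum w Aa \<le> sum w Ab" by (rule sum_mono2) (use True wnn finF in \<open>auto simp: Ab_def\<close>)
          moreover have "E = Aa" using E True by blast
          ultimately show ?thesis using ta tb by simp
        next
          case False
          then have ba: "Ab \<subseteq> Aa" using cmp by blast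
          have "sum w Ab \<le> sum w Aa" by (rule sum_mono2) (use ba wnn finF in \<open>auto simp: Aa_def\<close>)
          moreover have "E = Ab" using E ba by blast
          ultimately show ?thesis using ta tb by simp
        qed
      qed
      have "\<bar>zco x b\<bar> = sum w E"
      proof (cases "E = {}")
        case True
        then show ?thesis using zS[OF lb] unfolding E_def by (simp only: sum.empty abs_zero)
      next
        case False
        then obtain p1 where p1: "p1 \<in> E" by blast
        have "zco x b = sum (\<lambda>p. w p * sg (snd p1) b) E"
          unfolding zS[OF lb] E_def[symmetric]
        proof (rule sum.cong[OF refl])
          fix p assume p: "p \<in> E"
          have "snd p (eb b) = snd p1 (eb b)"
            using chain_col[OF chS, of p p1 "eb b"] p p1 eb_pairs2[OF lb] unfolding E_def by blast
          then show "w p * sg (snd p) b = w p * sg (snd p1) b" unfolding sg_def by simp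
        qed
        also have "\<dots> = sg (snd p1) b * sum w E" by (simp add: sum_distrib_right mult.commute)
        finally have "\<bar>zco x b\<bar> = \<bar>sg (snd p1) b\<bar> * \<bar>sum w E\<bar>" by (simp add: abs_mult)
        moreover have "\<bar>sg (snd p1) b\<bar> = 1" unfolding sg_def by simp
        moreover have "0 \<le> sum w E" using wnn by (simp add: sum_nonneg)
        ultimately show ?thesis by simp
      qed
      then show ?thesis using lb minE by simp
    qed
  qed
  moreover have "sum (tco x) V = 1" using sum_tco[OF XsD(2)[OF x]] Xs_sumPP[OF x] by simp
  ultimately show ?thesis unfolding Ys_def by simp
qed

lemma Ys_lift: assumes y: "(t, z) \<in> Ys" shows "\<exists>x\<in>Xs. tco x = t \<and> zco x = z"
proof -
  have Y: "Yc t z" and s1: "sum t V = 1" using y unfolding Ys_def by auto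
  obtain x where x: "\<forall>p. 0 \<le> x p" "{p. x p \<noteq> 0} \<subseteq> PP" "chainS {p. x p \<noteq> 0}" "tco x = t" "zco x = z"
    using surj_cone[OF refl Y] by blast
  have "sum x {p. x p \<noteq> 0} = sum x PP"
    by (rule sum.mono_neutral_left[OF finite_PP x(2)]) auto
  also have "\<dots> = sum (tco x) V" using sum_tco[OF x(2)] by simp
  also have "\<dots> = 1" using x(4) s1 by simp
  finally have "sum x {p. x p \<noteq> 0} = 1" .
  then have "x \<in> Xs" using x(1-3) unfolding Xs_def chainS_def by blast
  then show ?thesis using x(4,5) by blast
qed

lemma Ys_bt: assumes y: "(t, z) \<in> Ys"
  shows "bt t z \<in> Xs" "tco (bt t z) = t" "zco (bt t z) = z"
proof -
  obtain x where x: "x \<in> Xs" "tco x = t" "zco x = z" using Ys_lift[OF y] by blast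
  have "bt t z = x" using bt_tco[OF x(1)] x(2,3) by (simp add: fun_eq_iff)
  then show "bt t z \<in> Xs" "tco (bt t z) = t" "zco (bt t z) = z" using x by auto
qed

end

lemma cm_Min:
  assumes "finite A" "A \<noteq> {}" "\<And>i. i \<in> A \<Longrightarrow> continuous_map X euclideanreal (f i)"
  shows "continuous_map X euclideanreal (\<lambda>x. Min ((\<lambda>i. f i x) ` A))"
  using assms
proof (induct A rule: finite_ne_induct)
  case (singleton a) then show ?case by simp
next
  case (insert a F)
  have "(\<lambda>x. Min ((\<lambda>i. f i x) ` insert a F)) = (\<lambda>x. min (f a x) (Min ((\<lambda>i. f i x) ` F)))"
    using insert.hyps by (simp add: Min_insert)
  then show ?case using insert by (auto intro!: continuous_map_real_min)
qed

lemma cm_Max: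
  assumes "finite A" "A \<noteq> {}" "\<And>i. i \<in> A \<Longrightarrow> continuous_map X euclideanreal (f i)"
  shows "continuous_map X euclideanreal (\<lambda>x. Max ((\<lambda>i. f i x) ` A))"
  using assms
proof (induct A rule: finite_ne_induct)
  case (singleton a) then show ?case by simp
next
  case (insert a F)
  have "(\<lambda>x. Max ((\<lambda>i. f i x) ` insert a F)) = (\<lambda>x. max (f a x) (Max ((\<lambda>i. f i x) ` F)))"
    using insert.hyps by (simp add: Max_insert)
  then show ?case using insert by (auto intro!: continuous_map_real_max)
qed

context starsky begin

abbreviation "Xtop \<equiv> order_complex_realization PP inflation_less"

lemma Xtop_eq: "Xtop = subtopology (powertop_real UNIV) Xs"
  unfolding order_complex_realization_def Xs_def by simp

lemma topspace_Xtop: "topspace Xtop = Xs"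
  unfolding Xtop_eq by simp

definition "Ytop = subtopology (prod_topology (powertop_real UNIV) (powertop_real UNIV)) Ys"

lemma topspace_Ytop: "topspace Ytop = Ys"
  unfolding Ytop_def by simp

lemma cont_xproj: "continuous_map Xtop euclideanreal (\<lambda>x. x p)"
  unfolding Xtop_eq
  by (rule continuous_map_from_subtopology[OF continuous_map_product_projection]) simp

lemma cont_tco: "continuous_map Xtop euclideanreal (\<lambda>x. tco x v)"
  unfolding tco_def
  by (intro continuous_map_sum finite_PP continuous_map_real_mult_right cont_xproj)

lemma cont_zco: "continuous_map Xtop euclideanreal (\<lambda>x. zco x b)"
proof (cases "leaf b")
  case True
  then show ?thesis unfolding zco_def
    by (simp, intro continuous_map_sum finite_PP continuous_map_real_mult_right cont_xproj)
next
  case False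
  then show ?thesis unfolding zco_def by simp
qed

lemma cont_fwd: "continuous_map Xtop Ytop (\<lambda>x. (tco x, zco x))"
  unfolding Ytop_def continuous_map_in_subtopology
proof
  show "continuous_map Xtop (prod_topology (powertop_real UNIV) (powertop_real UNIV)) (\<lambda>x. (tco x, zco x))"
    unfolding continuous_map_pairwise o_def continuous_map_componentwise_UNIV
    using cont_tco cont_zco by simp
  show "(\<lambda>x. (tco x, zco x)) \<in> topspace Xtop \<rightarrow> Ys"
    using Xs_to_Ys topspace_Xtop by blast
qed

lemma cont_yfst: "continuous_map Ytop euclideanreal (\<lambda>y. fst y v)"
proof -
  have "continuous_map (prod_topology (powertop_real UNIV) (powertop_real UNIV)) euclideanreal ((\<lambda>t. t v) \<circ> fst)"
    by (rule continuous_map_compose[OF continuous_map_fst continuous_map_product_projection]) simp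
  then show ?thesis unfolding Ytop_def o_def by (rule continuous_map_from_subtopology)
qed

lemma cont_ysnd: "continuous_map Ytop euclideanreal (\<lambda>y. snd y v)"
proof -
  have "continuous_map (prod_topology (powertop_real UNIV) (powertop_real UNIV)) euclideanreal ((\<lambda>t. t v) \<circ> snd)"
    by (rule continuous_map_compose[OF continuous_map_snd continuous_map_product_projection]) simp
  then show ?thesis unfolding Ytop_def o_def by (rule continuous_map_from_subtopology)
qed

lemma cont_Amin: assumes "p \<in> PP"
  shows "continuous_map Ytop euclideanreal (\<lambda>y. Amin (fst y) (snd y) p)"
proof -
  define hh :: "'v + 'v \<Rightarrow> ('v \<Rightarrow> real) \<times> ('v \<Rightarrow> real) \<Rightarrow> real"
    where "hh i y = (case i of Inl v \<Rightarrow> fst y v | Inr b \<Rightarrow> sg (snd p) b * snd y b)" for i y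
  define A where "A = Inl ` fst p \<union> Inr ` {b. leaf b \<and> eb b \<subseteq> fst p}"
  have eq: "Amin (fst y) (snd y) p = Min ((\<lambda>i. hh i y) ` A)" for y
  proof -
    have "(\<lambda>i. hh i y) ` A = fst y ` fst p \<union> (\<lambda>b. sg (snd p) b * snd y b) ` {b. leaf b \<and> eb b \<subseteq> fst p}"
      unfolding A_def hh_def image_Un image_image by simp
    then show ?thesis unfolding Amin_def by simp
  qed
  have "continuous_map Ytop euclideanreal (\<lambda>y. Min ((\<lambda>i. hh i y) ` A))"
  proof (rule cm_Min)
    show "finite A" unfolding A_def using PP_fin[OF assms] fin_leafs by simp
    show "A \<noteq> {}" unfolding A_def using PP_D[OF assms] by simp
    fix i assume "i \<in> A"
    show "continuous_map Ytop euclideanreal (hh i)"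
      unfolding hh_def by (cases i) (simp_all add: cont_yfst cont_ysnd continuous_map_real_mult_left)
  qed
  then show ?thesis unfolding eq .
qed

lemma cont_Bmax: "continuous_map Ytop euclideanreal (\<lambda>y. Bmax (fst y) p)"
proof -
  define hh :: "'v option \<Rightarrow> ('v \<Rightarrow> real) \<times> ('v \<Rightarrow> real) \<Rightarrow> real"
    where "hh i y = (case i of None \<Rightarrow> 0 | Some v \<Rightarrow> fst y v)" for i y
  define A where "A = insert None (Some ` (V - fst p))"
  have eq: "Bmax (fst y) p = Max ((\<lambda>i. hh i y) ` A)" for y
  proof -
    have "(\<lambda>i. hh i y) ` A = insert 0 (fst y ` (V - fst p))"
      unfolding A_def hh_def image_insert image_image by simp
    then show ?thesis unfolding Bmax_def by simp
  qed
  have "continuous_map Ytop euclideanreal (\<lambda>y. Max ((\<lambda>i. hh i y) ` A))"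
  proof (rule cm_Max)
    show "finite A" unfolding A_def using finV by simp
    show "A \<noteq> {}" unfolding A_def by simp
    fix i assume "i \<in> A"
    show "continuous_map Ytop euclideanreal (hh i)"
      unfolding hh_def by (cases i) (simp_all add: cont_yfst)
  qed
  then show ?thesis unfolding eq .
qed

lemma cont_bwd: "continuous_map Ytop Xtop (\<lambda>y. bt (fst y) (snd y))"
  unfolding Xtop_eq continuous_map_in_subtopology
proof
  show "continuous_map Ytop (powertop_real UNIV) (\<lambda>y. bt (fst y) (snd y))"
    unfolding continuous_map_componentwise_UNIV
  proof
    fix p
    show "continuous_map Ytop euclideanreal (\<lambda>y. bt (fst y) (snd y) p)"
    proof (cases "p \<in> PP")
      case True
      then show ?thesis unfolding bt_def
        by (simp, intro continuous_map_real_mult_left continuous_map_real_max continuous_map_diff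
            continuous_map_canonical_const cont_Amin cont_Bmax True)
    next
      case False
      then show ?thesis unfolding bt_def by simp
    qed
  qed
  show "(\<lambda>y. bt (fst y) (snd y)) \<in> topspace Ytop \<rightarrow> Xs"
    using Ys_bt(1) topspace_Ytop by auto
qed

lemma X_homeo_Y: "Xtop homeomorphic_space Ytop"
  unfolding homeomorphic_space_def
proof (intro exI)
  show "homeomorphic_maps Xtop Ytop (\<lambda>x. (tco x, zco x)) (\<lambda>y. bt (fst y) (snd y))"
    unfolding homeomorphic_maps_def
  proof (intro conjI cont_fwd cont_bwd ballI)
    fix x assume "x \<in> topspace Xtop"
    then show "bt (fst (tco x, zco x)) (snd (tco x, zco x)) = x"
      using bt_tco topspace_Xtop by (simp add: fun_eq_iff)
  next
    fix y assume "y \<in> topspace Ytop"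
    then have "(fst y, snd y) \<in> Ys" using topspace_Ytop by simp
    then show "(tco (bt (fst y) (snd y)), zco (bt (fst y) (snd y))) = y"
      using Ys_bt(2,3) by (simp add: prod_eq_iff)
  qed
qed

end

definition clamp :: "real \<Rightarrow> real \<Rightarrow> real" where "clamp z m = max (- m) (min m z)"

lemma clamp_abs: assumes "0 \<le> m" "m \<le> \<bar>z\<bar>" shows "\<bar>clamp z m\<bar> = m"
proof (cases "0 \<le> z")
  case True then have "m \<le> z" using assms by simp
  then show ?thesis using assms unfolding clamp_def by (simp add: max_def min_def)
next
  case False then have "z \<le> - m" using assms by simp
  then show ?thesis using assms unfolding clamp_def by (simp add: max_def min_def)
qed

lemma clamp_id: assumes "\<bar>z\<bar> = m" shows "clamp z m = z"
proof (cases "0 \<le> z")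
  case True then show ?thesis using assms unfolding clamp_def by (simp add: max_def min_def)
next
  case False then show ?thesis using assms unfolding clamp_def by (simp add: max_def min_def)
qed

lemma clamp_div: assumes "0 < c" shows "clamp (z / c) (m / c) = clamp z m / c"
proof -
  have "clamp z m / c = max ((- m) / c) (min m z / c)"
    unfolding clamp_def using assms by (simp add: max_divide_distrib_right)
  also have "min m z / c = min (m / c) (z / c)" using assms by (simp add: min_divide_distrib_right)
  finally show ?thesis unfolding clamp_def by simp
qed

lemma clamp_sign: assumes "0 \<le> m" shows "0 \<le> z * clamp z m"
proof (cases "0 \<le> z")
  case True
  then have "0 \<le> clamp z m" using assms unfolding clamp_def by simp
  then show ?thesis using True by simp
next
  case False
  then have "clamp z m \<le> 0" using assms unfolding clamp_def by (simp add: max_def min_def)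
  then show ?thesis using False by (simp add: mult_nonpos_nonpos)
qed

lemma clamp_sign_pos: assumes "0 < m" "z \<noteq> 0" shows "0 < z * clamp z m"
proof (cases "0 < z")
  case True
  then have "0 < clamp z m" using assms unfolding clamp_def by simp
  then show ?thesis using True by simp
next
  case False
  then have "z < 0" using assms by simp
  then have "clamp z m < 0" using assms unfolding clamp_def by (simp add: max_def min_def)
  then show ?thesis using \<open>z < 0\<close> by (simp add: mult_neg_neg)
qed

lemma center_ineq:
  fixes a r m :: real
  assumes "0 \<le> r" "1 \<le> m"
  shows "a\<^sup>2 \<le> a * (max 0 (a + r) - r - m * max 0 (- a - r))"
proof (cases "0 \<le> a + r")
  case True
  then have "max 0 (a + r) = a + r" "max 0 (- a - r) = 0" by auto
  then show ?thesis by (simp add: power2_eq_square)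
next
  case False
  then have e: "max 0 (a + r) = 0" "max 0 (- a - r) = - a - r" by auto
  have "0 \<le> (m - 1) * ((- a) * (- (a + r)))"
    using False assms by (intro mult_nonneg_nonneg) auto
  moreover have "a * (0 - r - m * (- a - r)) - a\<^sup>2 = (m - 1) * ((- a) * (- (a + r)))"
    by (simp add: algebra_simps power2_eq_square)
  ultimately show ?thesis using e by simp
qed

context starsky begin

definition Lv :: "'v \<Rightarrow> 'v set" where "Lv a = {b\<in>V. cen b = a \<and> b \<noteq> a}"

lemma fin_Lv: "finite (Lv a)" unfolding Lv_def using finV by simp

lemma Lv_leaf: "b \<in> Lv a \<Longrightarrow> leaf b \<and> cen b = a" unfolding Lv_def leaf_def by auto

lemma leaf_Lv: "leaf b \<Longrightarrow> b \<in> Lv (cen b)" unfolding Lv_def leaf_def by auto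

lemma center_cen: "v \<in> V \<Longrightarrow> cen (cen v) = cen v \<and> cen v \<in> V" using cencen cenV by auto

lemma Lv_ne: "a \<in> V \<Longrightarrow> cen a = a \<Longrightarrow> Lv a \<noteq> {}"
  using hasleaf unfolding Lv_def by blast

lemma card_Lv: "a \<in> V \<Longrightarrow> cen a = a \<Longrightarrow> 1 \<le> real (card (Lv a))"
  using Lv_ne fin_Lv by (simp add: Suc_le_eq card_gt_0_iff)

definition fY :: "('v \<Rightarrow> real) \<times> ('v \<Rightarrow> real) \<Rightarrow> 'v \<Rightarrow> real" where
  "fY y v = (if v \<in> V then (if cen v = v then fst y v - sum (fst y) (Lv v) else snd y v) else 0)"

definition nsq :: "('v \<Rightarrow> real) \<Rightarrow> real" where "nsq u = (\<Sum>v\<in>V. (u v)\<^sup>2)"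

definition nrm :: "('v \<Rightarrow> real) \<Rightarrow> 'v \<Rightarrow> real" where "nrm u = (\<lambda>v. u v / sqrt (nsq u))"

definition Ss :: "('v \<Rightarrow> real) set" where "Ss = {u. (\<forall>v. v \<notin> V \<longrightarrow> u v = 0) \<and> nsq u = 1}"

definition rr :: "('v \<Rightarrow> real) \<Rightarrow> 'v \<Rightarrow> real" where "rr u a = (\<Sum>b\<in>Lv a. \<bar>u b\<bar>)"

definition gt :: "('v \<Rightarrow> real) \<Rightarrow> 'v \<Rightarrow> real" where
  "gt u v = (if v \<in> V then (if cen v = v then max 0 (u v + rr u v)
                else \<bar>u v\<bar> + max 0 (- u (cen v) - rr u (cen v))) else 0)"

definition gz :: "('v \<Rightarrow> real) \<Rightarrow> 'v \<Rightarrow> real" where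
  "gz u v = (if leaf v then clamp (u v) (min (gt u (cen v)) (gt u v)) else 0)"

definition Mg :: "('v \<Rightarrow> real) \<Rightarrow> real" where "Mg u = sum (gt u) V"

definition GG :: "('v \<Rightarrow> real) \<Rightarrow> ('v \<Rightarrow> real) \<times> ('v \<Rightarrow> real)" where
  "GG u = (\<lambda>v. gt u v / Mg u, \<lambda>v. gz u v / Mg u)"

definition FF :: "('v \<Rightarrow> real) \<times> ('v \<Rightarrow> real) \<Rightarrow> 'v \<Rightarrow> real" where "FF y = nrm (fY y)"

definition Dt :: "('v \<Rightarrow> real) \<Rightarrow> 'v \<Rightarrow> real" where "Dt t a = (\<Sum>b\<in>Lv a. max 0 (t b - t a))"

definition ht :: "real \<Rightarrow> ('v \<Rightarrow> real) \<Rightarrow> 'v \<Rightarrow> real" where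
  "ht s t v = (if v \<in> V then (if cen v = v then max 0 (t v - s * Dt t v)
     else min (t (cen v)) (t v) + (1 - s) * max 0 (t v - t (cen v)) + max 0 (s * Dt t (cen v) - t (cen v))) else 0)"

definition hz :: "real \<Rightarrow> ('v \<Rightarrow> real) \<Rightarrow> ('v \<Rightarrow> real) \<Rightarrow> 'v \<Rightarrow> real" where
  "hz s t z v = (if leaf v then clamp (z v) (min (ht s t (cen v)) (ht s t v)) else 0)"

definition HH :: "real \<Rightarrow> ('v \<Rightarrow> real) \<times> ('v \<Rightarrow> real) \<Rightarrow> ('v \<Rightarrow> real) \<times> ('v \<Rightarrow> real)" where
  "HH s y = (\<lambda>v. ht s (fst y) v / sum (ht s (fst y)) V, \<lambda>v. hz s (fst y) (snd y) v / sum (ht s (fst y)) V)"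

lemma Ys_norm:
  assumes "Yc t z" "0 < sum t V"
  shows "(\<lambda>v. t v / sum t V, \<lambda>v. z v / sum t V) \<in> Ys"
proof -
  let ?c = "sum t V"
  have "Yc (\<lambda>v. t v / ?c) (\<lambda>v. z v / ?c)"
    using assms unfolding Yc_def
    by (auto simp: divide_nonneg_pos min_divide_distrib_right split: if_splits)
  moreover have "sum (\<lambda>v. t v / ?c) V = 1" using assms(2) by (simp add: sum_divide_distrib[symmetric])
  ultimately show ?thesis unfolding Ys_def by simp
qed

lemma YsD: assumes "y \<in> Ys"
  shows "\<And>v. 0 \<le> fst y v" "\<And>v. v \<notin> V \<Longrightarrow> fst y v = 0" "\<And>b. leaf b \<Longrightarrow> \<bar>snd y b\<bar> = min (fst y (cen b)) (fst y b)"
    "\<And>b. \<not> leaf b \<Longrightarrow> snd y b = 0" "sum (fst y) V = 1"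
  using assms unfolding Ys_def Yc_def by (auto split: if_splits)

lemma gt_nn: "0 \<le> gt u v" unfolding gt_def by simp

lemma gt_leaf: "leaf v \<Longrightarrow> gt u v = \<bar>u v\<bar> + max 0 (- u (cen v) - rr u (cen v))"
  unfolding gt_def leaf_def by simp

lemma gt_center: "v \<in> V \<Longrightarrow> cen v = v \<Longrightarrow> gt u v = max 0 (u v + rr u v)"
  unfolding gt_def by simp

lemma rr_nn: "0 \<le> rr u a" unfolding rr_def by (simp add: sum_nonneg)

lemma Yc_g: "Yc (gt u) (gz u)"
  unfolding Yc_def
proof (intro conjI allI impI)
  fix v show "0 \<le> gt u v" by (rule gt_nn)
next
  fix v assume "v \<notin> V" then show "gt u v = 0" unfolding gt_def by simp
next
  fix b
  show "if leaf b then \<bar>gz u b\<bar> = min (gt u (cen b)) (gt u b) else gz u b = 0"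
  proof (cases "leaf b")
    case lb: True
    have cV: "cen b \<in> V" "cen (cen b) = cen b" using leafV[OF lb] cencen by auto
    have m: "min (gt u (cen b)) (gt u b) \<le> \<bar>u b\<bar>"
    proof (cases "0 < - u (cen b) - rr u (cen b)")
      case True
      then have "gt u (cen b) = 0" using gt_center[OF cV] by simp
      then show ?thesis by simp
    next
      case False
      then have "gt u b = \<bar>u b\<bar>" using gt_leaf[OF lb] by simp
      then show ?thesis by simp
    qed
    have "0 \<le> min (gt u (cen b)) (gt u b)" using gt_nn by simp
    then show ?thesis using lb m clamp_abs unfolding gz_def by simp
  next
    case False then show ?thesis unfolding gz_def by simp
  qed
qed

lemma Ss_nz: assumes "u \<in> Ss" shows "\<exists>v\<in>V. u v \<noteq> 0"
proof (rule ccontr)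
  assume "\<not> (\<exists>v\<in>V. u v \<noteq> 0)"
  then have "nsq u = 0" unfolding nsq_def by simp
  then show False using assms unfolding Ss_def by simp
qed

lemma Mg_pos: assumes "u \<in> Ss" shows "0 < Mg u"
proof -
  obtain v where v: "v \<in> V" "u v \<noteq> 0" using Ss_nz[OF assms] by blast
  have "\<exists>w\<in>V. 0 < gt u w"
  proof (cases "cen v = v")
    case False
    then have lv: "leaf v" using v unfolding leaf_def by simp
    have "0 < gt u v" using gt_leaf[OF lv] v(2) by (simp add: add_pos_nonneg)
    then show ?thesis using v by blast
  next
    case cv: True
    show ?thesis
    proof (cases "0 < u v + rr u v")
      case True
      then have "0 < gt u v" using gt_center[OF v(1) cv] by simp
      then show ?thesis using v by blast
    next
      case False
      obtain b where b: "b \<in> Lv v" using Lv_ne[OF v(1) cv] by blast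
      have lb: "leaf b" "cen b = v" using Lv_leaf[OF b] by auto
      show ?thesis
      proof (cases "0 < - u v - rr u v")
        case True
        then have "0 < gt u b" using gt_leaf[OF lb(1)] lb(2) by (simp add: add_nonneg_pos)
        then show ?thesis using lb leafV by blast
      next
        case False
        then have "rr u v = - u v" using \<open>\<not> 0 < u v + rr u v\<close> by simp
        then have "0 < rr u v" using \<open>\<not> 0 < u v + rr u v\<close> v(2) rr_nn[of u v] by linarith
        have "\<exists>b'\<in>Lv v. \<bar>u b'\<bar> \<noteq> 0"
        proof (rule ccontr)
          assume "\<not> (\<exists>b'\<in>Lv v. \<bar>u b'\<bar> \<noteq> 0)"
          then have "rr u v = 0" unfolding rr_def by simp
          then show False using \<open>0 < rr u v\<close> by simp
        qed
        then obtain b' where b': "b' \<in> Lv v" "\<bar>u b'\<bar> \<noteq> 0" by blast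
        have lb': "leaf b'" "cen b' = v" using Lv_leaf[OF b'(1)] by auto
        have "0 < gt u b'" using gt_leaf[OF lb'(1)] b'(2) by (simp add: add_pos_nonneg)
        then show ?thesis using lb' leafV by blast
      qed
    qed
  qed
  then obtain w where "w \<in> V" "0 < gt u w" by blast
  then show ?thesis unfolding Mg_def using finV gt_nn by (intro sum_pos2) auto
qed

lemma GG_in: "u \<in> Ss \<Longrightarrow> GG u \<in> Ys"
  unfolding GG_def Mg_def using Ys_norm[OF Yc_g] Mg_pos[unfolded Mg_def] by blast


lemma fY_nz: assumes y: "y \<in> Ys" shows "\<exists>v\<in>V. fY y v \<noteq> 0"
proof -
  note Y = YsD[OF y]
  define t where "t = fst y"
  have "\<exists>v\<in>V. t v \<noteq> 0"
  proof (rule ccontr)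
    assume "\<not> (\<exists>v\<in>V. t v \<noteq> 0)"
    then have "sum t V = 0" by simp
    then show False using Y(5) unfolding t_def by simp
  qed
  then obtain v where v: "v \<in> V" "t v \<noteq> 0" by blast
  have tpos: "0 < t v" using v Y(1)[of v] unfolding t_def by (simp add: order_le_neq_trans)
  define a where "a = cen v"
  have aV: "a \<in> V" and ca: "cen a = a" unfolding a_def using center_cen[OF v(1)] by auto
  show ?thesis
  proof (cases "fY y a = 0")
    case False then show ?thesis using aV by blast
  next
    case True
    then have ta: "t a = sum t (Lv a)" unfolding fY_def t_def using aV ca by simp
    have tnn: "\<And>w. 0 \<le> t w" using Y(1) unfolding t_def by blast
    show ?thesis
    proof (cases "t a = 0")
      case True
      then have "sum t (Lv a) = 0" using ta by simp
      then have "\<forall>b\<in>Lv a. t b = 0" using sum_nonneg_eq_0_iff[OF fin_Lv] tnn by blast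
      moreover have "v = a \<or> v \<in> Lv a" unfolding Lv_def a_def using v(1) by auto
      ultimately show ?thesis using True v(2) by auto
    next
      case False
      then have "0 < sum t (Lv a)" using ta tnn[of a] by simp
      have "\<exists>b\<in>Lv a. t b \<noteq> 0"
      proof (rule ccontr)
        assume "\<not> (\<exists>b\<in>Lv a. t b \<noteq> 0)"
        then have "sum t (Lv a) = 0" by simp
        then show False using \<open>0 < sum t (Lv a)\<close> by simp
      qed
      then obtain b where b: "b \<in> Lv a" "t b \<noteq> 0" by blast
      have lb: "leaf b" "cen b = a" using Lv_leaf[OF b(1)] by auto
      have bV: "b \<in> V" "cen b \<noteq> b" using leafV[OF lb(1)] by auto
      have "\<bar>snd y b\<bar> = min (t a) (t b)" using Y(3)[OF lb(1)] lb(2) unfolding t_def by simp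
      moreover have "0 < min (t a) (t b)" using False b(2) tnn[of a] tnn[of b] by simp
      ultimately have "fY y b \<noteq> 0" unfolding fY_def using bV by auto
      then show ?thesis using bV by blast
    qed
  qed
qed

lemma nsq_pos: assumes "\<exists>v\<in>V. u v \<noteq> 0" shows "0 < nsq u"
proof -
  obtain v where "v \<in> V" "u v \<noteq> 0" using assms by blast
  then show ?thesis unfolding nsq_def using finV by (intro sum_pos2) auto
qed

lemma nsq_nrm: assumes "0 < nsq u" shows "nsq (nrm u) = 1"
proof -
  have "nsq (nrm u) = (\<Sum>v\<in>V. (u v)\<^sup>2 / nsq u)"
    unfolding nsq_def nrm_def using assms[unfolded nsq_def]
    by (simp add: power_divide)
  also have "\<dots> = nsq u / nsq u" by (simp only: sum_divide_distrib[symmetric] nsq_def)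
  finally show ?thesis using assms by simp
qed

lemma nrm_unit: "nsq u = 1 \<Longrightarrow> nrm u = u"
  unfolding nrm_def by simp

lemma nrm_in: assumes "0 < nsq u" "\<And>v. v \<notin> V \<Longrightarrow> u v = 0" shows "nrm u \<in> Ss"
  unfolding Ss_def using nsq_nrm[OF assms(1)] assms(2) unfolding nrm_def by simp

lemma FF_in: "y \<in> Ys \<Longrightarrow> FF y \<in> Ss"
  unfolding FF_def by (rule nrm_in[OF nsq_pos[OF fY_nz]]) (auto simp: fY_def)

lemma Dt_nn: "0 \<le> Dt t a" unfolding Dt_def by (simp add: sum_nonneg)

lemma ht_props:
  assumes y: "y \<in> Ys" and s: "0 \<le> s" "s \<le> 1"
  shows "Yc (ht s (fst y)) (hz s (fst y) (snd y))" "0 < sum (ht s (fst y)) V"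
proof -
  note Y = YsD[OF y]
  define t where "t = fst y"
  define z where "z = snd y"
  have tnn: "\<And>w. 0 \<le> t w" using Y(1) unfolding t_def by blast
  have htnn: "\<And>v. 0 \<le> ht s t v" unfolding ht_def using tnn s by (simp add: add_nonneg_nonneg)
  have htout: "\<And>v. v \<notin> V \<Longrightarrow> ht s t v = 0" unfolding ht_def by simp
  have hta: "\<And>a. a \<in> V \<Longrightarrow> cen a = a \<Longrightarrow> ht s t a \<le> t a"
    unfolding ht_def using Dt_nn tnn s by (simp add: mult_nonneg_nonneg)
  have htv: "\<And>v. leaf v \<Longrightarrow> ht s t v = min (t (cen v)) (t v) + (1 - s) * max 0 (t v - t (cen v))
      + max 0 (s * Dt t (cen v) - t (cen v))"
    unfolding ht_def leaf_def by simp
  have htc: "\<And>a. a \<in> V \<Longrightarrow> cen a = a \<Longrightarrow> ht s t a = max 0 (t a - s * Dt t a)"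
    unfolding ht_def by simp
  have minle: "\<And>v. leaf v \<Longrightarrow> min (ht s t (cen v)) (ht s t v) \<le> min (t (cen v)) (t v)"
  proof -
    fix v assume lv: "leaf v"
    have cV: "cen v \<in> V" "cen (cen v) = cen v" using leafV[OF lv] cencen by auto
    show "min (ht s t (cen v)) (ht s t v) \<le> min (t (cen v)) (t v)"
    proof (cases "t (cen v) \<le> t v")
      case True
      then show ?thesis using hta[OF cV] by simp
    next
      case False
      then have e1: "max 0 (t v - t (cen v)) = 0" by simp
      show ?thesis
      proof (cases "t (cen v) < s * Dt t (cen v)")
        case True
        then have "ht s t (cen v) = 0" using htc[OF cV] by simp
        then show ?thesis using tnn[of v] tnn[of "cen v"] by (simp add: min_le_iff_disj)
      next
        case False
        then have "ht s t v = t v" using htv[OF lv] e1 \<open>\<not> t (cen v) \<le> t v\<close> by simp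
        then show ?thesis using \<open>\<not> t (cen v) \<le> t v\<close> by simp
      qed
    qed
  qed
  show "Yc (ht s (fst y)) (hz s (fst y) (snd y))"
    unfolding t_def[symmetric] z_def[symmetric] Yc_def
  proof (intro conjI allI impI)
    fix v show "0 \<le> ht s t v" by (rule htnn)
  next
    fix v assume "v \<notin> V" then show "ht s t v = 0" by (rule htout)
  next
    fix b
    show "if leaf b then \<bar>hz s t z b\<bar> = min (ht s t (cen b)) (ht s t b) else hz s t z b = 0"
    proof (cases "leaf b")
      case True
      have "\<bar>z b\<bar> = min (t (cen b)) (t b)" using Y(3)[OF True] unfolding t_def z_def .
      then have "min (ht s t (cen b)) (ht s t b) \<le> \<bar>z b\<bar>" using minle[OF True] by simp
      moreover have "0 \<le> min (ht s t (cen b)) (ht s t b)" using htnn by simp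
      ultimately show ?thesis using True clamp_abs unfolding hz_def by simp
    next
      case False then show ?thesis unfolding hz_def by simp
    qed
  qed
  have "\<exists>v\<in>V. t v \<noteq> 0"
  proof (rule ccontr)
    assume "\<not> (\<exists>v\<in>V. t v \<noteq> 0)"
    then have "sum t V = 0" by simp
    then show False using Y(5) unfolding t_def by simp
  qed
  then obtain v where v: "v \<in> V" "t v \<noteq> 0" by blast
  have tv: "0 < t v" using v tnn[of v] by (simp add: order_le_neq_trans)
  have "\<exists>w\<in>V. 0 < ht s t w"
  proof (cases "cen v = v")
    case cv: True
    show ?thesis
    proof (cases "0 < t v - s * Dt t v")
      case True
      then have "0 < ht s t v" using htc[OF v(1) cv] by simp
      then show ?thesis using v(1) by blast
    next
      case False
      have "0 < Dt t v"
      proof (rule ccontr)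
        assume "\<not> 0 < Dt t v"
        then have "Dt t v = 0" using Dt_nn[of t v] by simp
        then show False using False tv by simp
      qed
      have "\<exists>b\<in>Lv v. max 0 (t b - t v) \<noteq> 0"
      proof (rule ccontr)
        assume "\<not> (\<exists>b\<in>Lv v. max 0 (t b - t v) \<noteq> 0)"
        then have "Dt t v = 0" unfolding Dt_def by simp
        then show False using \<open>0 < Dt t v\<close> by simp
      qed
      then obtain b where b: "b \<in> Lv v" "t v < t b" by force
      have lb: "leaf b" "cen b = v" using Lv_leaf[OF b(1)] by auto
      have "min (t (cen b)) (t b) \<le> ht s t b" using htv[OF lb(1)] s by (simp add: add_nonneg_nonneg)
      then have "0 < ht s t b" using lb(2) b(2) tv by simp
      then show ?thesis using leafV[OF lb(1)] by blast
    qed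
  next
    case False
    then have lv: "leaf v" using v unfolding leaf_def by simp
    define a where "a = cen v"
    have rest: "0 \<le> (1 - s) * max 0 (t v - t a)" "0 \<le> max 0 (s * Dt t a - t a)" using s by simp_all
    have "0 < ht s t v"
    proof (cases "0 < min (t a) (t v)")
      case True then show ?thesis using htv[OF lv] rest unfolding a_def[symmetric] by linarith
    next
      case False
      then have ta0: "t a = 0" using tv tnn[of a] by (simp add: min_def split: if_splits)
      have "v \<in> Lv a" using leaf_Lv[OF lv] unfolding a_def .
      then have "max 0 (t v - t a) \<le> Dt t a" unfolding Dt_def
        by (intro member_le_sum fin_Lv) auto
      then have "t v \<le> Dt t a" using ta0 tv by simp
      then have "s * t v \<le> s * Dt t a" using s by (simp add: mult_left_mono)
      then have "ht s t v \<ge> (1 - s) * t v + s * t v"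
        using htv[OF lv] ta0 tnn[of v] unfolding a_def[symmetric] by simp
      then show ?thesis using tv by (simp add: algebra_simps)
    qed
    then show ?thesis using v(1) by blast
  qed
  then obtain w where "w \<in> V" "0 < ht s t w" by blast
  then show "0 < sum (ht s (fst y)) V" unfolding t_def[symmetric] using finV htnn by (intro sum_pos2) auto
qed

lemma HH_in: "y \<in> Ys \<Longrightarrow> 0 \<le> s \<Longrightarrow> s \<le> 1 \<Longrightarrow> HH s y \<in> Ys"
  unfolding HH_def using Ys_norm ht_props by blast

lemma HH0: assumes y: "y \<in> Ys" shows "HH 0 y = y"
proof -
  note Y = YsD[OF y]
  have e: "ht 0 (fst y) v = fst y v" for v
  proof -
    have "0 \<le> fst y (cen v)" "0 \<le> fst y v" using Y(1) by auto
    then show ?thesis unfolding ht_def using Y(2)[of v] by (auto simp: max_def min_def)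
  qed
  have e2: "hz 0 (fst y) (snd y) v = snd y v" for v
  proof (cases "leaf v")
    case True then show ?thesis unfolding hz_def e using clamp_id[OF Y(3)[OF True]] by simp
  next
    case False then show ?thesis unfolding hz_def using Y(4)[OF False] by simp
  qed
  show ?thesis unfolding HH_def e e2 using Y(5) by simp
qed

lemma gt_div: assumes "0 < c" shows "gt (\<lambda>v. u v / c) w = gt u w / c"
proof -
  have rr: "rr (\<lambda>v. u v / c) a = rr u a / c" for a
    unfolding rr_def using assms by (simp add: sum_divide_distrib)
  have m: "max 0 (x / c) = max 0 x / c" for x using assms by (simp add: max_divide_distrib_right)
  show ?thesis unfolding gt_def rr using assms
    by (auto simp: m[symmetric] diff_divide_distrib add_divide_distrib)
qed

lemma gz_div: assumes "0 < c" shows "gz (\<lambda>v. u v / c) w = gz u w / c"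
proof -
  have "min (gt u (cen w) / c) (gt u w / c) = min (gt u (cen w)) (gt u w) / c"
    using assms by (simp add: min_divide_distrib_right)
  then show ?thesis unfolding gz_def gt_div[OF assms] using clamp_div[OF assms] by simp
qed

lemma GG_div: assumes "0 < c" shows "GG (\<lambda>v. u v / c) = GG u"
proof -
  have M: "Mg (\<lambda>v. u v / c) = Mg u / c" unfolding Mg_def gt_div[OF assms] by (simp add: sum_divide_distrib)
  show ?thesis unfolding GG_def M gt_div[OF assms] gz_div[OF assms] using assms by simp
qed

lemma HH1: assumes y: "y \<in> Ys" shows "HH 1 y = GG (FF y)"
proof -
  note Y = YsD[OF y]
  define t where "t = fst y"
  define z where "z = snd y"
  have tnn: "\<And>w. 0 \<le> t w" using Y(1) unfolding t_def by blast
  have k: "0 < sqrt (nsq (fY y))" using nsq_pos[OF fY_nz[OF y]] by simp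
  have "GG (FF y) = GG (fY y)" unfolding FF_def nrm_def using GG_div[OF k] by simp
  have rrf: "rr (fY y) a = (\<Sum>b\<in>Lv a. min (t a) (t b))" if "a \<in> V" "cen a = a" for a
    unfolding rr_def
  proof (rule sum.cong[OF refl])
    fix b assume b: "b \<in> Lv a"
    have lb: "leaf b" "cen b = a" using Lv_leaf[OF b] by auto
    have "fY y b = z b" unfolding fY_def z_def using leafV[OF lb(1)] by simp
    then show "\<bar>fY y b\<bar> = min (t a) (t b)" using Y(3)[OF lb(1)] lb(2) unfolding t_def z_def by simp
  qed
  have key: "fY y a + rr (fY y) a = t a - Dt t a" if "a \<in> V" "cen a = a" for a
  proof -
    have "fY y a = t a - sum t (Lv a)" unfolding fY_def t_def using that by simp
    moreover have "sum t (Lv a) - (\<Sum>b\<in>Lv a. min (t a) (t b)) = Dt t a"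
      unfolding Dt_def sum_subtractf[symmetric] by (rule sum.cong) (auto simp: max_def min_def)
    ultimately show ?thesis using rrf[OF that] by simp
  qed
  have eqt: "gt (fY y) v = ht 1 t v" for v
  proof (cases "v \<in> V")
    case False then show ?thesis unfolding gt_def ht_def by simp
  next
    case vV: True
    show ?thesis
    proof (cases "cen v = v")
      case True
      then show ?thesis unfolding gt_def ht_def using vV key[OF vV True] by simp
    next
      case False
      then have lv: "leaf v" using vV unfolding leaf_def by simp
      have cV: "cen v \<in> V" "cen (cen v) = cen v" using leafV[OF lv] cencen by auto
      have "fY y v = z v" unfolding fY_def z_def using vV False by simp
      then have "\<bar>fY y v\<bar> = min (t (cen v)) (t v)" using Y(3)[OF lv] unfolding t_def z_def by simp
      moreover have "- fY y (cen v) - rr (fY y) (cen v) = Dt t (cen v) - t (cen v)" using key[OF cV] by simp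
      ultimately show ?thesis unfolding gt_def ht_def using vV False by simp
    qed
  qed
  have eqz: "gz (fY y) v = hz 1 t z v" for v
  proof (cases "leaf v")
    case True
    have "fY y v = z v" unfolding fY_def z_def using leafV[OF True] by simp
    then show ?thesis unfolding gz_def hz_def eqt using True by simp
  next
    case False then show ?thesis unfolding gz_def hz_def by simp
  qed
  have "GG (fY y) = HH 1 y" unfolding GG_def HH_def Mg_def eqt eqz t_def z_def by simp
  then show ?thesis using \<open>GG (FF y) = GG (fY y)\<close> by simp
qed

lemma fY_div: assumes "0 < c"
  shows "fY (\<lambda>v. t v / c, \<lambda>v. z v / c) w = fY (t, z) w / c"
  unfolding fY_def using assms by (simp add: sum_divide_distrib diff_divide_distrib)

lemma inner_pos: assumes u: "u \<in> Ss" shows "0 < (\<Sum>v\<in>V. FF (GG u) v * u v)"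
proof -
  define M where "M = Mg u"
  have Mpos: "0 < M" unfolding M_def using Mg_pos[OF u] .
  have GGin: "GG u \<in> Ys" using GG_in[OF u] .
  define k where "k = sqrt (nsq (fY (GG u)))"
  have kpos: "0 < k" unfolding k_def using nsq_pos[OF fY_nz[OF GGin]] by simp
  have FFe: "FF (GG u) v = fY (gt u, gz u) v / (M * k)" for v
  proof -
    have "FF (GG u) v = fY (GG u) v / k" unfolding FF_def nrm_def k_def by simp
    moreover have "fY (GG u) v = fY (gt u, gz u) v / M" unfolding GG_def M_def[symmetric] using fY_div[OF Mpos] by simp
    ultimately show ?thesis by simp
  qed
  have uout: "\<And>v. v \<notin> V \<Longrightarrow> u v = 0" using u unfolding Ss_def by simp
  define trm where "trm v = fY (gt u, gz u) v * u v" for v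
  have term_center: "(u a)\<^sup>2 \<le> trm a" if "a \<in> V" "cen a = a" for a
  proof -
    have sb: "sum (gt u) (Lv a) = rr u a + real (card (Lv a)) * max 0 (- u a - rr u a)"
    proof -
      have "sum (gt u) (Lv a) = (\<Sum>b\<in>Lv a. \<bar>u b\<bar> + max 0 (- u a - rr u a))"
      proof (rule sum.cong[OF refl])
        fix b assume "b \<in> Lv a"
        then have "leaf b" "cen b = a" using Lv_leaf by auto
        then show "gt u b = \<bar>u b\<bar> + max 0 (- u a - rr u a)" using gt_leaf by simp
      qed
      then show ?thesis unfolding rr_def by (simp add: sum.distrib)
    qed
    have "trm a = u a * (max 0 (u a + rr u a) - rr u a - real (card (Lv a)) * max 0 (- u a - rr u a))"
      unfolding trm_def fY_def using that gt_center[OF that] sb by (simp add: mult.commute)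
    then show ?thesis using center_ineq[OF rr_nn card_Lv[OF that], of "u a" u] by simp
  qed
  have term_leaf: "0 \<le> trm v" if "leaf v" for v
  proof -
    have "trm v = u v * clamp (u v) (min (gt u (cen v)) (gt u v))"
      unfolding trm_def fY_def gz_def using leafV[OF that] that by (simp add: mult.commute)
    then show ?thesis using clamp_sign gt_nn by simp
  qed
  have term_nn: "0 \<le> trm v" if "v \<in> V" for v
  proof (cases "cen v = v")
    case True then show ?thesis using term_center[OF that True] zero_le_power2[of "u v"] by linarith
  next
    case False then show ?thesis using term_leaf that unfolding leaf_def by simp
  qed
  have "\<exists>v\<in>V. 0 < trm v"
  proof (cases "\<exists>a\<in>V. cen a = a \<and> u a \<noteq> 0")
    case True
    then obtain a where a: "a \<in> V" "cen a = a" "u a \<noteq> 0" by blast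
    then have "0 < (u a)\<^sup>2" by simp
    then show ?thesis using term_center[OF a(1,2)] a(1) by (meson less_le_trans)
  next
    case False
    obtain v where v: "v \<in> V" "u v \<noteq> 0" using Ss_nz[OF u] by blast
    then have lv: "leaf v" using False unfolding leaf_def by auto
    define a where "a = cen v"
    have aV: "a \<in> V" "cen a = a" unfolding a_def using leafV[OF lv] cencen by auto
    have ua: "u a = 0" using False aV by blast
    have "\<bar>u v\<bar> \<le> rr u a" unfolding rr_def a_def
      by (intro member_le_sum fin_Lv leaf_Lv[OF lv]) auto
    then have rpos: "0 < rr u a" using v(2) by simp
    have g1: "gt u a = rr u a" using gt_center[OF aV] ua rr_nn[of u a] by simp
    have g2: "gt u v = \<bar>u v\<bar>" using gt_leaf[OF lv] ua rr_nn[of u a] unfolding a_def[symmetric] by simp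
    have "0 < min (gt u a) (gt u v)" using g1 g2 rpos v(2) by simp
    then have "0 < u v * clamp (u v) (min (gt u a) (gt u v))" using clamp_sign_pos v(2) by simp
    moreover have "trm v = u v * clamp (u v) (min (gt u a) (gt u v))"
      unfolding trm_def fY_def gz_def a_def using leafV[OF lv] lv by (simp add: mult.commute)
    ultimately have "0 < trm v" by simp
    then show ?thesis using v(1) by blast
  qed
  then obtain v0 where "v0 \<in> V" "0 < trm v0" by blast
  then have Q: "0 < sum trm V" using finV term_nn by (intro sum_pos2) auto
  have "(\<Sum>v\<in>V. FF (GG u) v * u v) = sum trm V / (M * k)"
    unfolding FFe trm_def by (simp add: sum_divide_distrib)
  then show ?thesis using Q Mpos kpos by simp
qed

end

context starsky begin

lemma cont_rr: assumes "\<And>v. continuous_map T euclideanreal (\<lambda>x. f x v)"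
  shows "continuous_map T euclideanreal (\<lambda>x. rr (f x) a)"
  unfolding rr_def by (intro continuous_map_sum fin_Lv continuous_map_real_abs assms)

lemma cont_gt: assumes "\<And>v. continuous_map T euclideanreal (\<lambda>x. f x v)"
  shows "continuous_map T euclideanreal (\<lambda>x. gt (f x) w)"
  unfolding gt_def
  by (cases "w \<in> V"; cases "cen w = w")
     (simp_all, (intro continuous_map_real_max continuous_map_add continuous_map_diff continuous_map_minus
        continuous_map_real_abs continuous_map_canonical_const cont_rr assms)+)

lemma cont_gz: assumes "\<And>v. continuous_map T euclideanreal (\<lambda>x. f x v)"
  shows "continuous_map T euclideanreal (\<lambda>x. gz (f x) w)"
  unfolding gz_def clamp_def
  by (cases "leaf w")
     (simp_all, intro continuous_map_real_max continuous_map_real_min continuous_map_minus cont_gt assms)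

lemma cont_Mg: assumes "\<And>v. continuous_map T euclideanreal (\<lambda>x. f x v)"
  shows "continuous_map T euclideanreal (\<lambda>x. Mg (f x))"
  unfolding Mg_def by (intro continuous_map_sum finV cont_gt assms)

lemma cont_fY: assumes "\<And>v. continuous_map T euclideanreal (\<lambda>x. fst (h x) v)"
    "\<And>v. continuous_map T euclideanreal (\<lambda>x. snd (h x) v)"
  shows "continuous_map T euclideanreal (\<lambda>x. fY (h x) w)"
  unfolding fY_def
  by (cases "w \<in> V"; cases "cen w = w")
     (simp_all add: assms, (intro continuous_map_diff continuous_map_sum fin_Lv assms)+)

lemma cont_nsq: assumes "\<And>v. continuous_map T euclideanreal (\<lambda>x. f x v)"
  shows "continuous_map T euclideanreal (\<lambda>x. nsq (f x))"
  unfolding nsq_def by (intro continuous_map_sum finV continuous_map_real_pow assms)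

lemma cont_Dt: assumes "\<And>v. continuous_map T euclideanreal (\<lambda>x. f x v)"
  shows "continuous_map T euclideanreal (\<lambda>x. Dt (f x) a)"
  unfolding Dt_def by (intro continuous_map_sum fin_Lv continuous_map_real_max continuous_map_diff
      continuous_map_canonical_const assms)

lemma cont_ht: assumes "\<And>v. continuous_map T euclideanreal (\<lambda>x. f x v)"
    "continuous_map T euclideanreal \<sigma>"
  shows "continuous_map T euclideanreal (\<lambda>x. ht (\<sigma> x) (f x) w)"
  unfolding ht_def
  by (cases "w \<in> V"; cases "cen w = w")
     (simp_all, (intro continuous_map_real_max continuous_map_real_min continuous_map_add continuous_map_diff
        continuous_map_real_mult continuous_map_canonical_const cont_Dt assms)+)

lemma cont_hz: assumes "\<And>v. continuous_map T euclideanreal (\<lambda>x. f x v)"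
    "\<And>v. continuous_map T euclideanreal (\<lambda>x. g x v)"
    "continuous_map T euclideanreal \<sigma>"
  shows "continuous_map T euclideanreal (\<lambda>x. hz (\<sigma> x) (f x) (g x) w)"
  unfolding hz_def clamp_def
  by (cases "leaf w")
     (simp_all, intro continuous_map_real_max continuous_map_real_min continuous_map_minus cont_ht assms)

definition "Stop = subtopology (powertop_real UNIV) Ss"

lemma topspace_Stop: "topspace Stop = Ss" unfolding Stop_def by simp

lemma cont_sproj: "continuous_map Stop euclideanreal (\<lambda>u. u v)"
  unfolding Stop_def
  by (rule continuous_map_from_subtopology[OF continuous_map_product_projection]) simp

lemma cont_FF: "continuous_map Ytop Stop FF"
  unfolding Stop_def continuous_map_in_subtopology
proof
  show "continuous_map Ytop (powertop_real UNIV) FF"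
    unfolding continuous_map_componentwise_UNIV FF_def nrm_def
  proof
    fix v
    show "continuous_map Ytop euclideanreal (\<lambda>y. fY y v / sqrt (nsq (fY y)))"
    proof (intro continuous_map_real_divide continuous_map_sqrt cont_nsq cont_fY cont_yfst cont_ysnd)
      fix y assume "y \<in> topspace Ytop"
      then have "y \<in> Ys" using topspace_Ytop by simp
      then have "0 < nsq (fY y)" using nsq_pos[OF fY_nz] by blast
      then show "sqrt (nsq (fY y)) \<noteq> 0" by simp
    qed
  qed
  show "FF \<in> topspace Ytop \<rightarrow> Ss" using FF_in topspace_Ytop by blast
qed

lemma cont_GGc: "continuous_map Stop euclideanreal (\<lambda>u. fst (GG u) v)"
  "continuous_map Stop euclideanreal (\<lambda>u. snd (GG u) v)"
proof -
  have nz: "\<And>u. u \<in> topspace Stop \<Longrightarrow> Mg u \<noteq> 0" using Mg_pos topspace_Stop by fastforce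
  show "continuous_map Stop euclideanreal (\<lambda>u. fst (GG u) v)"
    unfolding GG_def by (simp, intro continuous_map_real_divide cont_gt cont_Mg cont_sproj nz)
  show "continuous_map Stop euclideanreal (\<lambda>u. snd (GG u) v)"
    unfolding GG_def by (simp, intro continuous_map_real_divide cont_gz cont_Mg cont_sproj nz)
qed

lemma cont_GG: "continuous_map Stop Ytop GG"
  unfolding Ytop_def continuous_map_in_subtopology
proof
  show "continuous_map Stop (prod_topology (powertop_real UNIV) (powertop_real UNIV)) GG"
    unfolding continuous_map_pairwise o_def continuous_map_componentwise_UNIV
    using cont_GGc by simp
  show "GG \<in> topspace Stop \<rightarrow> Ys" using GG_in topspace_Stop by blast
qed

lemma cm_into_Ytop:
  assumes "\<And>v. continuous_map T euclideanreal (\<lambda>x. fst (f x) v)"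
    "\<And>v. continuous_map T euclideanreal (\<lambda>x. snd (f x) v)"
    "\<And>x. x \<in> topspace T \<Longrightarrow> f x \<in> Ys"
  shows "continuous_map T Ytop f"
  unfolding Ytop_def continuous_map_in_subtopology continuous_map_pairwise o_def continuous_map_componentwise_UNIV
  using assms by blast

lemma hom_Y: "homotopic_with (\<lambda>x. True) Ytop Ytop (GG \<circ> FF) id"
proof -
  let ?T = "prod_topology (top_of_set {0..1::real}) Ytop"
  have cs: "continuous_map ?T euclideanreal (\<lambda>z. 1 - fst z)"
    by (intro continuous_map_diff continuous_map_canonical_const
        continuous_map_into_fulltopology[OF continuous_map_fst])
  have cy1: "continuous_map ?T euclideanreal (\<lambda>z. fst (snd z) v)" for v
    using continuous_map_compose[OF continuous_map_snd cont_yfst] by (simp add: o_def)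
  have cy2: "continuous_map ?T euclideanreal (\<lambda>z. snd (snd z) v)" for v
    using continuous_map_compose[OF continuous_map_snd cont_ysnd] by (simp add: o_def)
  have tT: "topspace ?T = {0..1} \<times> Ys" by (simp add: topspace_Ytop)
  have tsp: "z \<in> topspace ?T \<Longrightarrow> 0 \<le> 1 - fst z \<and> 1 - fst z \<le> 1 \<and> snd z \<in> Ys" for z
    unfolding tT by (cases z) simp
  have nz: "sum (ht (1 - fst z) (fst (snd z))) V \<noteq> 0" if z: "z \<in> topspace ?T" for z
  proof -
    have "0 \<le> 1 - fst z" "1 - fst z \<le> 1" "snd z \<in> Ys" using tsp[OF z] by auto
    then have "0 < sum (ht (1 - fst z) (fst (snd z))) V" using ht_props(2) by blast
    then show ?thesis by simp
  qed
  have c1: "continuous_map ?T euclideanreal (\<lambda>z. fst (HH (1 - fst z) (snd z)) v)" for v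
    unfolding HH_def fst_conv
    by (intro continuous_map_real_divide continuous_map_sum finV cont_ht cy1 cs nz)
  have c2: "continuous_map ?T euclideanreal (\<lambda>z. snd (HH (1 - fst z) (snd z)) v)" for v
    unfolding HH_def snd_conv
    by (intro continuous_map_real_divide continuous_map_sum finV cont_ht cont_hz cy1 cy2 cs nz)
  have c3: "HH (1 - fst z) (snd z) \<in> Ys" if z: "z \<in> topspace ?T" for z
  proof -
    have "0 \<le> 1 - fst z" "1 - fst z \<le> 1" "snd z \<in> Ys" using tsp[OF z] by auto
    then show "HH (1 - fst z) (snd z) \<in> Ys" using HH_in by blast
  qed
  have cont: "continuous_map ?T Ytop (\<lambda>z. HH (1 - fst z) (snd z))"
    by (rule cm_into_Ytop[OF c1 c2 c3])
  have eq: "homotopic_with (\<lambda>x. True) Ytop Ytop (GG \<circ> FF) id \<longleftrightarrow>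
           (\<exists>h. continuous_map ?T Ytop h \<and>
              (\<forall>x \<in> topspace Ytop. h(0,x) = (GG \<circ> FF) x) \<and>
              (\<forall>x \<in> topspace Ytop. h(1,x) = id x))"
    using homotopic_with[where P="\<lambda>x. True" and X=Ytop and Y=Ytop and p="GG \<circ> FF" and q=id] by simp
  show ?thesis
    unfolding eq
  proof (intro exI conjI ballI)
    show "continuous_map ?T Ytop (\<lambda>z. HH (1 - fst z) (snd z))" by (rule cont)
  next
    fix y assume "y \<in> topspace Ytop"
    then have y: "y \<in> Ys" using topspace_Ytop by simp
    show "HH (1 - fst (0::real, y)) (snd (0::real, y)) = (GG \<circ> FF) y" using HH1[OF y] by simp
    show "HH (1 - fst (1::real, y)) (snd (1::real, y)) = id y" using HH0[OF y] by simp
  qed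
qed


definition ww :: "real \<Rightarrow> ('v \<Rightarrow> real) \<Rightarrow> 'v \<Rightarrow> real" where
  "ww s u = (\<lambda>v. (1 - s) * FF (GG u) v + s * u v)"

lemma ww_pos: assumes u: "u \<in> Ss" and s: "0 \<le> s" "s \<le> 1" shows "0 < nsq (ww s u)"
proof -
  have P: "0 < (\<Sum>v\<in>V. FF (GG u) v * u v)" using inner_pos[OF u] .
  have N: "(\<Sum>v\<in>V. u v * u v) = 1" using u unfolding Ss_def nsq_def by (simp add: power2_eq_square)
  have "(\<Sum>v\<in>V. ww s u v * u v) = (\<Sum>v\<in>V. (1 - s) * (FF (GG u) v * u v) + s * (u v * u v))"
    unfolding ww_def by (rule sum.cong) (auto simp: algebra_simps)
  also have "\<dots> = (1 - s) * (\<Sum>v\<in>V. FF (GG u) v * u v) + s * (\<Sum>v\<in>V. u v * u v)"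
    by (simp add: sum.distrib sum_distrib_left)
  also have "\<dots> > 0"
  proof (cases "s = 1")
    case True then show ?thesis using N by simp
  next
    case False
    then have "0 < 1 - s" using s by simp
    then have "0 < (1 - s) * (\<Sum>v\<in>V. FF (GG u) v * u v)" using P by simp
    moreover have "0 \<le> s * (\<Sum>v\<in>V. u v * u v)" using N s by simp
    ultimately show ?thesis by simp
  qed
  finally have pos: "0 < (\<Sum>v\<in>V. ww s u v * u v)" .
  have "\<exists>v\<in>V. ww s u v \<noteq> 0"
  proof (rule ccontr)
    assume "\<not> (\<exists>v\<in>V. ww s u v \<noteq> 0)"
    then have "(\<Sum>v\<in>V. ww s u v * u v) = 0" by simp
    then show False using pos by simp
  qed
  then show ?thesis by (rule nsq_pos)
qed

lemma ww_out: assumes u: "u \<in> Ss" shows "v \<notin> V \<Longrightarrow> ww s u v = 0"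
proof -
  assume v: "v \<notin> V"
  have "FF (GG u) \<in> Ss" using FF_in[OF GG_in[OF u]] .
  then show ?thesis using u v unfolding ww_def Ss_def by simp
qed

lemma cm_into_Stop:
  assumes "\<And>v. continuous_map T euclideanreal (\<lambda>x. f x v)"
    "\<And>x. x \<in> topspace T \<Longrightarrow> f x \<in> Ss"
  shows "continuous_map T Stop f"
  unfolding Stop_def continuous_map_in_subtopology continuous_map_componentwise_UNIV
  using assms by blast

lemma hom_S: "homotopic_with (\<lambda>x. True) Stop Stop (FF \<circ> GG) id"
proof -
  let ?T = "prod_topology (top_of_set {0..1::real}) Stop"
  have cs: "continuous_map ?T euclideanreal (\<lambda>z. fst z)"
    by (rule continuous_map_into_fulltopology[OF continuous_map_fst])
  have cu: "continuous_map ?T euclideanreal (\<lambda>z. snd z v)" for v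
    using continuous_map_compose[OF continuous_map_snd cont_sproj] by (simp add: o_def)
  have cFG0: "continuous_map Stop euclideanreal (\<lambda>u. FF (GG u) v)" for v
    using continuous_map_compose[OF continuous_map_compose[OF cont_GG cont_FF] cont_sproj] by (simp add: o_def)
  have cFG: "continuous_map ?T euclideanreal (\<lambda>z. FF (GG (snd z)) v)" for v
    using continuous_map_compose[OF continuous_map_snd cFG0] by (simp add: o_def)
  have tT: "topspace ?T = {0..1} \<times> Ss" by (simp add: topspace_Stop)
  have tsp: "z \<in> topspace ?T \<Longrightarrow> 0 \<le> fst z \<and> fst z \<le> 1 \<and> snd z \<in> Ss" for z
    unfolding tT by (cases z) simp
  have nz: "sqrt (nsq (ww (fst z) (snd z))) \<noteq> 0" if z: "z \<in> topspace ?T" for z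
  proof -
    have "0 \<le> fst z" "fst z \<le> 1" "snd z \<in> Ss" using tsp[OF z] by auto
    then have "0 < nsq (ww (fst z) (snd z))" using ww_pos by blast
    then show ?thesis by simp
  qed
  have cw: "continuous_map ?T euclideanreal (\<lambda>z. ww (fst z) (snd z) v)" for v
    unfolding ww_def
    by (intro continuous_map_add continuous_map_real_mult continuous_map_diff continuous_map_canonical_const cs cu cFG)
  have c1: "continuous_map ?T euclideanreal (\<lambda>z. nrm (ww (fst z) (snd z)) v)" for v
    unfolding nrm_def
    by (intro continuous_map_real_divide continuous_map_sqrt cont_nsq cw nz)
  have c3: "nrm (ww (fst z) (snd z)) \<in> Ss" if z: "z \<in> topspace ?T" for z
  proof -
    have "0 \<le> fst z" "fst z \<le> 1" "snd z \<in> Ss" using tsp[OF z] by auto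
    then show ?thesis using nrm_in[OF ww_pos ww_out] by blast
  qed
  have cont: "continuous_map ?T Stop (\<lambda>z. nrm (ww (fst z) (snd z)))"
    by (rule cm_into_Stop[OF c1 c3])
  have eq: "homotopic_with (\<lambda>x. True) Stop Stop (FF \<circ> GG) id \<longleftrightarrow>
           (\<exists>h. continuous_map ?T Stop h \<and>
              (\<forall>x \<in> topspace Stop. h(0,x) = (FF \<circ> GG) x) \<and>
              (\<forall>x \<in> topspace Stop. h(1,x) = id x))"
    using homotopic_with[where P="\<lambda>x. True" and X=Stop and Y=Stop and p="FF \<circ> GG" and q=id] by simp
  show ?thesis
    unfolding eq
  proof (intro exI conjI ballI)
    show "continuous_map ?T Stop (\<lambda>z. nrm (ww (fst z) (snd z)))" by (rule cont)
  next
    fix u assume "u \<in> topspace Stop"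
    then have u: "u \<in> Ss" using topspace_Stop by simp
    have "ww 0 u = FF (GG u)" unfolding ww_def by simp
    moreover have "nsq (FF (GG u)) = 1" using FF_in[OF GG_in[OF u]] unfolding Ss_def by simp
    ultimately show "nrm (ww (fst (0::real, u)) (snd (0::real, u))) = (FF \<circ> GG) u"
      using nrm_unit by simp
    have "ww 1 u = u" unfolding ww_def by simp
    moreover have "nsq u = 1" using u unfolding Ss_def by simp
    ultimately show "nrm (ww (fst (1::real, u)) (snd (1::real, u))) = id u"
      using nrm_unit by simp
  qed
qed

lemma Y_eqv_S: "Ytop homotopy_equivalent_space Stop"
  unfolding homotopy_equivalent_space_def
  using cont_FF cont_GG hom_Y hom_S by blast

lemma S_homeo_sphere: assumes "V \<noteq> {}" shows "Stop homeomorphic_space nsphere (card V - 1)"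
proof -
  define n where "n = card V"
  have npos: "0 < n" unfolding n_def using assms finV by (simp add: card_gt_0_iff)
  obtain \<nu> where nu: "bij_betw \<nu> {0..<n} V" unfolding n_def using ex_bij_betw_nat_finite[OF finV] by blast
  define \<iota> where "\<iota> = inv_into {0..<n} \<nu>"
  have iota: "bij_betw \<iota> V {0..<n}" unfolding \<iota>_def using bij_betw_inv_into[OF nu] .
  have nu_in: "\<And>i. i < n \<Longrightarrow> \<nu> i \<in> V" using nu unfolding bij_betw_def by auto
  have iota_lt: "\<And>v. v \<in> V \<Longrightarrow> \<iota> v < n" using iota unfolding bij_betw_def by auto
  have nu_iota: "\<And>v. v \<in> V \<Longrightarrow> \<nu> (\<iota> v) = v" unfolding \<iota>_def using nu
    by (simp add: bij_betw_def f_inv_into_f)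
  have iota_nu: "\<And>i. i < n \<Longrightarrow> \<iota> (\<nu> i) = i" unfolding \<iota>_def using nu
    by (simp add: bij_betw_def inv_into_f_f)
  define Sph where "Sph = {x::nat \<Rightarrow> real. (\<Sum>i\<le>n - 1. (x i)\<^sup>2) = 1 \<and> (\<forall>i>n - 1. x i = 0)}"
  have nsph: "nsphere (card V - 1) = subtopology (powertop_real UNIV) Sph"
    unfolding Sph_def n_def by (rule nsphere)
  have atm: "{..n - 1} = {0..<n}" using npos by auto
  have gt: "\<And>i. (n - 1 < i) = (n \<le> i)" using npos by auto
  define \<phi> where "\<phi> u = (\<lambda>i. if i < n then u (\<nu> i) else 0)" for u :: "'v \<Rightarrow> real"
  define \<psi> where "\<psi> x = (\<lambda>v. if v \<in> V then x (\<iota> v) else 0)" for x :: "nat \<Rightarrow> real"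
  have phi_in: "\<phi> u \<in> Sph" if u: "u \<in> Ss" for u
  proof -
    have "(\<Sum>i\<le>n - 1. (\<phi> u i)\<^sup>2) = (\<Sum>i\<in>{0..<n}. (u (\<nu> i))\<^sup>2)"
      unfolding atm \<phi>_def by (rule sum.cong) auto
    also have "\<dots> = (\<Sum>v\<in>V. (u v)\<^sup>2)" using sum.reindex_bij_betw[OF nu, of "\<lambda>v. (u v)\<^sup>2"] by simp
    also have "\<dots> = 1" using u unfolding Ss_def nsq_def by simp
    finally show ?thesis unfolding Sph_def \<phi>_def using gt by auto
  qed
  have psi_in: "\<psi> x \<in> Ss" if x: "x \<in> Sph" for x
  proof -
    have "nsq (\<psi> x) = (\<Sum>v\<in>V. (x (\<iota> v))\<^sup>2)" unfolding nsq_def \<psi>_def by (rule sum.cong) auto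
    also have "\<dots> = (\<Sum>i\<in>{0..<n}. (x i)\<^sup>2)" using sum.reindex_bij_betw[OF iota, of "\<lambda>i. (x i)\<^sup>2"] by simp
    also have "\<dots> = 1" using x unfolding Sph_def atm by simp
    finally show ?thesis unfolding Ss_def \<psi>_def by simp
  qed
  have "homeomorphic_maps Stop (nsphere (card V - 1)) \<phi> \<psi>"
    unfolding homeomorphic_maps_def nsph
  proof (intro conjI ballI)
    show "continuous_map Stop (subtopology (powertop_real UNIV) Sph) \<phi>"
      unfolding continuous_map_in_subtopology continuous_map_componentwise_UNIV
    proof (intro conjI allI)
      fix i show "continuous_map Stop euclideanreal (\<lambda>x. \<phi> x i)"
        unfolding \<phi>_def by (cases "i < n") (simp_all add: cont_sproj)
    next
      show "\<phi> \<in> topspace Stop \<rightarrow> Sph" using phi_in topspace_Stop by blast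
    qed
    show "continuous_map (subtopology (powertop_real UNIV) Sph) Stop \<psi>"
    proof (rule cm_into_Stop)
      fix v show "continuous_map (subtopology (powertop_real UNIV) Sph) euclideanreal (\<lambda>x. \<psi> x v)"
      proof (cases "v \<in> V")
        case True
        have "continuous_map (subtopology (powertop_real UNIV) Sph) euclideanreal (\<lambda>x. x (\<iota> v))"
          by (rule continuous_map_from_subtopology[OF continuous_map_product_projection]) simp
        then show ?thesis unfolding \<psi>_def using True by simp
      next
        case False then show ?thesis unfolding \<psi>_def by simp
      qed
    next
      fix x assume "x \<in> topspace (subtopology (powertop_real UNIV) Sph)"
      then show "\<psi> x \<in> Ss" using psi_in by simp
    qed
  next
    fix u assume "u \<in> topspace Stop"
    then have u: "u \<in> Ss" using topspace_Stop by simp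
    show "\<psi> (\<phi> u) = u"
    proof
      fix v show "\<psi> (\<phi> u) v = u v"
        unfolding \<psi>_def \<phi>_def using u iota_lt nu_iota unfolding Ss_def by auto
    qed
  next
    fix x assume "x \<in> topspace (subtopology (powertop_real UNIV) Sph)"
    then have x: "x \<in> Sph" by simp
    show "\<phi> (\<psi> x) = x"
    proof
      fix i show "\<phi> (\<psi> x) i = x i"
      proof (cases "i < n")
        case True then show ?thesis unfolding \<psi>_def \<phi>_def using nu_in iota_nu by simp
      next
        case False then show ?thesis unfolding \<phi>_def using x gt unfolding Sph_def by simp
      qed
    qed
  qed
  then show ?thesis unfolding homeomorphic_space_def by blast
qed

lemma main_nonempty: assumes "V \<noteq> {}"
  shows "Xtop homotopy_equivalent_space nsphere (card V - 1)"
proof -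
  have "Xtop homotopy_equivalent_space Ytop"
    by (rule homeomorphic_imp_homotopy_equivalent_space[OF X_homeo_Y])
  also have "Ytop homotopy_equivalent_space Stop" by (rule Y_eqv_S)
  also have "Stop homotopy_equivalent_space nsphere (card V - 1)"
    by (rule homeomorphic_imp_homotopy_equivalent_space[OF S_homeo_sphere[OF assms]])
  finally show ?thesis .
qed

lemma main_empty: assumes "V = {}" shows "topspace Xtop = {}"
proof -
  have P0: "PP = {}" using assms unfolding inflation_def by auto
  have "x \<notin> Xs" for x :: "('v set \<times> ('v set \<Rightarrow> nat)) \<Rightarrow> real"
  proof
    assume x: "x \<in> Xs"
    have "{p. x p \<noteq> 0} = {}" using XsD(2)[OF x] P0 by blast
    then have "sum x {p. x p \<noteq> 0} = 0" by (simp only: sum.empty)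
    then show False using XsD(4)[OF x] by simp
  qed
  then have "(Xs :: (('v set \<times> ('v set \<Rightarrow> nat)) \<Rightarrow> real) set) = {}" by blast
  then show ?thesis using topspace_Xtop by simp
qed

end

theorem lemma4p13:
  fixes V :: "'v set" and \<mu> :: "'v set \<Rightarrow> nat"
  assumes "finite V"
    and "\<forall>e\<in>pairs2 V. 1 \<le> \<mu> e"
    and "starry_sky V \<mu>"
  shows "topspace (order_complex_realization (inflation V \<mu>) inflation_less) = {} \<or>
         (\<exists>n. order_complex_realization (inflation V \<mu>) inflation_less
                homotopy_equivalent_space nsphere n)"
proof -
  define adj where "adj = Gmu_adj V \<mu>"
  define comp where "comp v = {w. adj\<^sup>*\<^sup>* v w}" for v
  define starp where "starp C c \<longleftrightarrow> (\<forall>u\<in>C. \<forall>w\<in>C. adj u w \<longleftrightarrow> u \<noteq> w \<and> (u = c \<or> w = c))" for C c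
  define cen where "cen v = (SOME c. c \<in> comp v \<and> starp (comp v) c)" for v
  have adj_sym: "\<And>u w. adj u w \<Longrightarrow> adj w u"
    unfolding adj_def Gmu_adj_def by (auto simp: insert_commute)
  have adjV: "\<And>u w. adj u w \<Longrightarrow> u \<in> V \<and> w \<in> V"
    unfolding adj_def Gmu_adj_def by auto
  have symr: "symp adj\<^sup>*\<^sup>*" by (rule symp_rtranclp) (auto intro: sympI adj_sym)
  have comp_self: "\<And>v. v \<in> comp v" unfolding comp_def by simp
  have comp_V: "\<And>v. v \<in> V \<Longrightarrow> comp v \<subseteq> V"
  proof
    fix v w assume v: "v \<in> V" and "w \<in> comp v"
    then have "adj\<^sup>*\<^sup>* v w" unfolding comp_def by simp
    then show "w \<in> V"
      by (induction rule: rtranclp_induct) (use v adjV in auto)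
  qed
  have comp_eq: "\<And>v w. w \<in> comp v \<Longrightarrow> comp w = comp v"
  proof -
    fix v w assume "w \<in> comp v"
    then have vw: "adj\<^sup>*\<^sup>* v w" unfolding comp_def by simp
    then have wv: "adj\<^sup>*\<^sup>* w v" using symr by (meson sympD)
    show "comp w = comp v"
      unfolding comp_def using vw wv by (auto intro: rtranclp_trans)
  qed
  have star: "\<And>v. v \<in> V \<Longrightarrow> 2 \<le> card (comp v) \<and> (\<exists>c\<in>comp v. starp (comp v) c)"
  proof -
    fix v assume v: "v \<in> V"
    have "comp v \<in> Gmu_components V \<mu>"
      unfolding Gmu_components_def comp_def adj_def using v by blast
    then have "is_star_component V \<mu> (comp v)" using assms(3) unfolding starry_sky_def by blast
    then show "2 \<le> card (comp v) \<and> (\<exists>c\<in>comp v. starp (comp v) c)"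
      unfolding is_star_component_def starp_def adj_def by blast
  qed
  have cen_prop: "\<And>v. v \<in> V \<Longrightarrow> cen v \<in> comp v \<and> starp (comp v) (cen v)"
  proof -
    fix v assume v: "v \<in> V"
    have "\<exists>c. c \<in> comp v \<and> starp (comp v) c" using star[OF v] by blast
    then show "cen v \<in> comp v \<and> starp (comp v) (cen v)" unfolding cen_def by (rule someI_ex)
  qed
  have cen_eq: "\<And>v w. w \<in> comp v \<Longrightarrow> cen w = cen v"
    unfolding cen_def using comp_eq by simp
  have cenV: "\<And>v. v \<in> V \<Longrightarrow> cen v \<in> V" using cen_prop comp_V by blast
  have cencen: "\<And>v. v \<in> V \<Longrightarrow> cen (cen v) = cen v" using cen_prop cen_eq by blast
  have hasleaf: "\<And>a. a \<in> V \<Longrightarrow> cen a = a \<Longrightarrow> \<exists>b\<in>V. cen b = a \<and> b \<noteq> a"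
  proof -
    fix a assume a: "a \<in> V" "cen a = a"
    have fin: "finite (comp a)" using comp_V[OF a(1)] assms(1) finite_subset by blast
    have "2 \<le> card (comp a)" using star[OF a(1)] by simp
    have "\<not> comp a \<subseteq> {a}"
    proof
      assume "comp a \<subseteq> {a}"
      then have "card (comp a) \<le> card {a}" by (intro card_mono) auto
      then show False using \<open>2 \<le> card (comp a)\<close> by simp
    qed
    then obtain b where b: "b \<in> comp a" "b \<noteq> a" by blast
    have "b \<in> V" using b(1) comp_V[OF a(1)] by blast
    moreover have "cen b = a" using cen_eq[OF b(1)] a(2) by simp
    ultimately show "\<exists>b\<in>V. cen b = a \<and> b \<noteq> a" using b(2) by blast
  qed
  have mu12: "\<And>e. e \<in> pairs2 V \<Longrightarrow> 1 \<le> \<mu> e \<and> \<mu> e \<le> 2"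
    using assms(2,3) unfolding starry_sky_def by blast
  have mu2: "\<And>e. e \<in> pairs2 V \<Longrightarrow> (1 < \<mu> e \<longleftrightarrow> (\<exists>b\<in>V. cen b \<noteq> b \<and> e = {cen b, b}))"
  proof -
    fix e assume e: "e \<in> pairs2 V"
    then have "e \<subseteq> V" "card e = 2" unfolding pairs2_def by auto
    then obtain u w where uw: "e = {u, w}" "u \<noteq> w" "u \<in> V" "w \<in> V" by (auto simp: card_2_iff)
    show "1 < \<mu> e \<longleftrightarrow> (\<exists>b\<in>V. cen b \<noteq> b \<and> e = {cen b, b})"
    proof
      assume "1 < \<mu> e"
      then have a: "adj u w" unfolding adj_def Gmu_adj_def using uw by simp
      then have wc: "w \<in> comp u" unfolding comp_def by simp
      have "starp (comp u) (cen u)" using cen_prop[OF uw(3)] by simp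
      then have "u = cen u \<or> w = cen u" using a wc comp_self[of u] unfolding starp_def by blast
      then show "\<exists>b\<in>V. cen b \<noteq> b \<and> e = {cen b, b}"
      proof
        assume h: "u = cen u"
        have "cen w = u" using cen_eq[OF wc] h by simp
        then show ?thesis using uw by (intro bexI[of _ w]) auto
      next
        assume h: "w = cen u"
        then show ?thesis using uw by (intro bexI[of _ u]) auto
      qed
    next
      assume "\<exists>b\<in>V. cen b \<noteq> b \<and> e = {cen b, b}"
      then obtain b where b: "b \<in> V" "cen b \<noteq> b" "e = {cen b, b}" by blast
      have cb: "cen b \<in> comp b" "starp (comp b) (cen b)" using cen_prop[OF b(1)] by auto
      then have "adj (cen b) b" using comp_self[of b] b(2) unfolding starp_def by metis
      then show "1 < \<mu> e" unfolding adj_def Gmu_adj_def using b(3) by simp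
    qed
  qed
  interpret S: starsky V \<mu> cen
    by unfold_locales (use assms(1) cenV cencen hasleaf mu12 mu2 in auto)
  show ?thesis
  proof (cases "V = {}")
    case True then show ?thesis using S.main_empty by blast
  next
    case False then show ?thesis using S.main_nonempty by blast
  qed
qed

end
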